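(* Let $d\ge 2$. Let $P$ be the Power Spherical distribution on $\mathbb{S}^{d-1}$ with direction $\mu_p\in\mathbb{S}^{d-1}$ and concentration $\kappa_p\ge 0$, and let $Q$ be the von Mises-Fisher distribution on $\mathbb{S}^{d-1}$ with direction $\mu_q\in\mathbb{S}^{d-1}$ and concentration $\kappa_q\ge 0$. With $\alpha=\frac{d-1}{2}+\kappa_p$ and $\beta=\frac{d-1}{2}$, $$\mathrm{D_{KL}}[P\|Q] = -\operatorname{H}(P) + \log C_X(\kappa_q,d) - \kappa_q\,\mu_q^\top\mu_p\left(\frac{\alpha-\beta}{\alpha+\beta}\right),$$ where $\operatorname{H}(P)$ is the differential entropy of $P$.
   Context: $\mathbb{S}^{d-1}=\{x\in\mathbb{R}^d:\|x\|_2=1\}$ with surface measure $\sigma$. The Power Spherical distribution with direction $\mu$ and concentration $\kappa$ has density w.r.t. $\sigma$ proportional to $(1+\mu^\top x)^\kappa$. The von Mises-Fisher distribution with direction $\mu_q$ and concentration $\kappa_q$ has density $q(x) = C_X(\kappa_q,d)^{-1}\exp(\kappa_q\mu_q^\top x)$ w.r.t. $\sigma$, where $C_X(\kappa_q,d)=\int_{\mathbb{S}^{d-1}}\exp(\kappa_q\mu_q^\top x)\,d\sigma(x)$ is its normalizer. $\operatorname{H}(P) = -\mathbb{E}_{p}[\log p]$ and $\mathrm{D_{KL}}[P\|Q] = -\operatorname{H}(P) - \mathbb{E}_{p}[\log q]$. *)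

theory Defs
  imports "HOL-Analysis.Analysis"
begin

text \<open>This is the standard (Hausdorff) surface measure.\<close>
definition sphere_surface :: "'a::euclidean_space measure" where
  "sphere_surface = measure_of (sphere 0 1) (sets (restrict_space borel (sphere 0 1)))
     (\<lambda>A. of_nat DIM('a) * emeasure lborel ((\<lambda>(t::real, x). t *\<^sub>R x) ` ({0<..1} \<times> A)))"

text \<open>Unnormalised Power Spherical density (1 + mu^T x)^kappa, with the convention 0^0 = 1.\<close>
definition ps_unnorm :: "real \<Rightarrow> 'a::euclidean_space \<Rightarrow> 'a \<Rightarrow> real" where
  "ps_unnorm \<kappa> \<mu> x = (if \<kappa> = 0 then 1 else (1 + \<mu> \<bullet> x) powr \<kappa>)"

definition ps_density :: "real \<Rightarrow> 'a::euclidean_space \<Rightarrow> 'a \<Rightarrow> real" where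
  "ps_density \<kappa> \<mu> x = ps_unnorm \<kappa> \<mu> x / (\<integral>y. ps_unnorm \<kappa> \<mu> y \<partial>sphere_surface)"

definition vmf_norm :: "real \<Rightarrow> 'a::euclidean_space \<Rightarrow> real" where
  "vmf_norm \<kappa> \<mu> = (\<integral>x. exp (\<kappa> * (\<mu> \<bullet> x)) \<partial>(sphere_surface :: 'a measure))"

definition vmf_density :: "real \<Rightarrow> 'a::euclidean_space \<Rightarrow> 'a \<Rightarrow> real" where
  "vmf_density \<kappa> \<mu> x = exp (\<kappa> * (\<mu> \<bullet> x)) / vmf_norm \<kappa> \<mu>"

definition sph_entropy :: "('a::euclidean_space \<Rightarrow> real) \<Rightarrow> real" where
  "sph_entropy p = - (\<integral>x. p x * ln (p x) \<partial>sphere_surface)"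

definition sph_KL :: "('a::euclidean_space \<Rightarrow> real) \<Rightarrow> ('a \<Rightarrow> real) \<Rightarrow> real" where
  "sph_KL p q = - sph_entropy p - (\<integral>x. p x * ln (q x) \<partial>sphere_surface)"

end

theory Submission
  imports Defs
begin


definition nrm :: "'a::euclidean_space \<Rightarrow> 'a" where
  "nrm z = (if z = 0 then (SOME b. b \<in> Basis) else z /\<^sub>R norm z)"

definition DD :: "'a::euclidean_space set" where "DD = cball 0 1 - {0}"

lemma nrm_sphere: "nrm (z::'a::euclidean_space) \<in> sphere 0 1"
proof (cases "z = 0")
  case True
  have "(SOME b. b \<in> (Basis::'a set)) \<in> Basis" by (rule someI_ex) (use nonempty_Basis in blast)
  then show ?thesis using True by (simp add: nrm_def)
qed (simp add: nrm_def)

lemma norm_nrm[simp]: "norm (nrm (z::'a::euclidean_space)) = 1"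
  using nrm_sphere[of z] by simp

lemma nrm_meas[measurable]: "nrm \<in> borel_measurable borel"
  unfolding nrm_def by measurable

lemma DD_sets[measurable]: "DD \<in> sets borel" unfolding DD_def by simp

lemma nrm_scale: "c > 0 \<Longrightarrow> nrm (c *\<^sub>R z) = nrm z"
  by (cases "z = 0") (auto simp: nrm_def)

lemma nrm_eq: "z \<noteq> 0 \<Longrightarrow> nrm z = z /\<^sub>R norm z" by (simp add: nrm_def)

definition N0 :: "'a::euclidean_space measure" where
  "N0 = density lborel (\<lambda>z. ennreal (real DIM('a)) * indicator DD z)"

definition NN :: "'a::euclidean_space measure" where
  "NN = distr N0 (restrict_space borel (sphere 0 1)) nrm"

lemma cone_eq:
  assumes "A \<subseteq> sphere (0::'a::euclidean_space) 1"
  shows "(\<lambda>(t::real, x). t *\<^sub>R x) ` ({0<..1} \<times> A) = nrm -` A \<inter> DD"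
proof
  show "(\<lambda>(t::real, x). t *\<^sub>R x) ` ({0<..1} \<times> A) \<subseteq> nrm -` A \<inter> DD"
  proof clarify
    fix t x assume t: "t \<in> {0<..1::real}" and x: "x \<in> A"
    then have nx: "norm x = 1" using assms by auto
    then have "x \<noteq> 0" by auto
    then show "t *\<^sub>R x \<in> nrm -` A \<inter> DD" using t x nx
      by (auto simp: nrm_scale DD_def nrm_eq)
  qed
  show "nrm -` A \<inter> DD \<subseteq> (\<lambda>(t::real, x). t *\<^sub>R x) ` ({0<..1} \<times> A)"
  proof
    fix z assume z: "z \<in> nrm -` A \<inter> DD"
    then have z0: "z \<noteq> 0" and zn: "norm z \<le> 1" by (auto simp: DD_def)
    have "z = (\<lambda>(t, x). t *\<^sub>R x) (norm z, nrm z)" using z0 by (simp add: nrm_eq)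
    moreover have "(norm z, nrm z) \<in> {0<..1} \<times> A" using z z0 zn by auto
    ultimately show "z \<in> (\<lambda>(t::real, x). t *\<^sub>R x) ` ({0<..1} \<times> A)" by blast
  qed
qed

lemma sphere_surface_eq: "(sphere_surface :: 'a::euclidean_space measure) = NN"
proof -
  have sp: "space (NN::'a measure) = sphere 0 1" by (simp add: NN_def space_restrict_space)
  have st: "sets (NN::'a measure) = sets (restrict_space borel (sphere (0::'a) 1))" by (simp add: NN_def)
  have "(sphere_surface :: 'a measure) = measure_of (space NN) (sets NN) (emeasure NN)"
    unfolding sphere_surface_def sp st
  proof (rule measure_of_eq)
    show "sets (restrict_space borel (sphere (0::'a) 1)) \<subseteq> Pow (sphere 0 1)"
      using sets.sets_into_space[of _ "restrict_space borel (sphere (0::'a) 1)"]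
      by (auto simp: space_restrict_space)
    fix a assume "a \<in> sigma_sets (sphere (0::'a) 1) (sets (restrict_space borel (sphere 0 1)))"
    then have a: "a \<in> sets (restrict_space borel (sphere (0::'a) 1))"
      using sigma_algebra.sigma_sets_eq[OF sets.sigma_algebra_axioms[of "restrict_space borel (sphere (0::'a) 1)"]]
      by (simp add: space_restrict_space)
    then have asub: "a \<subseteq> sphere 0 1" using sets.sets_into_space[OF a] by (simp add: space_restrict_space)
    have ab: "a \<in> sets borel" using a by (subst (asm) sets_restrict_space_iff) auto
    have nab[measurable]: "nrm -` a \<in> sets borel" using measurable_sets_borel[OF nrm_meas ab] .
    have m: "nrm \<in> measurable N0 (restrict_space borel (sphere (0::'a) 1))"
      by (rule measurable_restrict_space2) (auto simp: N0_def nrm_sphere)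
    have "emeasure NN a = emeasure N0 (nrm -` a \<inter> space N0)"
      unfolding NN_def by (rule emeasure_distr[OF m a])
    also have "\<dots> = (\<integral>\<^sup>+ z. ennreal (real DIM('a)) * indicator (nrm -` a \<inter> DD) z \<partial>lborel)"
      unfolding N0_def using ab
      by (subst emeasure_density) (auto intro!: nn_integral_cong split: split_indicator)
    also have "\<dots> = ennreal (real DIM('a)) * emeasure lborel (nrm -` a \<inter> DD)"
      using ab by (subst nn_integral_cmult_indicator) auto
    finally show "of_nat DIM('a) * emeasure lborel ((\<lambda>(t::real, x). t *\<^sub>R x) ` ({0<..1} \<times> a)) = emeasure NN a"
      using cone_eq[OF asub] by (simp add: ennreal_of_nat_eq_real_of_nat)
  qed
  also have "\<dots> = NN" by (rule measure_of_of_measure)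
  finally show ?thesis .
qed



lemma N0_alt: "(N0::'a::euclidean_space measure) = density lborel (\<lambda>z. ennreal (real DIM('a) * indicator DD z))"
  unfolding N0_def by (intro arg_cong[where f="density lborel"] ext) (simp split: split_indicator)

lemma meas_sph: "f \<in> borel_measurable borel \<Longrightarrow> f \<in> borel_measurable (sphere_surface :: 'a::euclidean_space measure)"
  unfolding sphere_surface_eq NN_def
  by (simp add: measurable_restrict_space1)

lemma int_sph:
  fixes f :: "'a::euclidean_space \<Rightarrow> real"
  assumes [measurable]: "f \<in> borel_measurable borel"
  shows "(\<integral>x. f x \<partial>sphere_surface) = real DIM('a) * (\<integral>z. indicator DD z * f (nrm z) \<partial>lborel)"
proof -
  have m: "nrm \<in> measurable (N0::'a measure) (restrict_space borel (sphere (0::'a) 1))"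
    by (rule measurable_restrict_space2) (auto simp: N0_def)
  have "(\<integral>x. f x \<partial>sphere_surface) = (\<integral>z. f (nrm z) \<partial>(N0::'a measure))"
    unfolding sphere_surface_eq NN_def
    by (rule integral_distr[OF m]) (simp add: measurable_restrict_space1)
  also have "\<dots> = (\<integral>z. (real DIM('a) * indicator DD z) *\<^sub>R f (nrm z) \<partial>lborel)"
    unfolding N0_alt by (rule integral_density) auto
  also have "\<dots> = real DIM('a) * (\<integral>z. indicator DD z * f (nrm z) \<partial>lborel)"
    by (simp add: mult.assoc)
  finally show ?thesis .
qed

lemma nn_int_sph:
  fixes f :: "'a::euclidean_space \<Rightarrow> ennreal"
  assumes [measurable]: "f \<in> borel_measurable borel"
  shows "(\<integral>\<^sup>+x. f x \<partial>sphere_surface) = ennreal (real DIM('a)) * (\<integral>\<^sup>+z. indicator DD z * f (nrm z) \<partial>lborel)"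
proof -
  have m: "nrm \<in> measurable (N0::'a measure) (restrict_space borel (sphere (0::'a) 1))"
    by (rule measurable_restrict_space2) (auto simp: N0_def)
  have "(\<integral>\<^sup>+x. f x \<partial>sphere_surface) = (\<integral>\<^sup>+z. f (nrm z) \<partial>(N0::'a measure))"
    unfolding sphere_surface_eq NN_def
    by (rule nn_integral_distr[OF m]) (simp add: measurable_restrict_space1)
  also have "\<dots> = (\<integral>\<^sup>+z. ennreal (real DIM('a)) * (indicator DD z * f (nrm z)) \<partial>lborel)"
    unfolding N0_def by (subst nn_integral_density) (auto simp: mult.assoc)
  also have "\<dots> = ennreal (real DIM('a)) * (\<integral>\<^sup>+z. indicator DD z * f (nrm z) \<partial>lborel)"
    by (rule nn_integral_cmult) auto
  finally show ?thesis .
qed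

lemma emeasure_DD_fin: "emeasure lborel (DD::'a::euclidean_space set) < \<infinity>"
proof -
  have "emeasure lborel (DD::'a set) \<le> emeasure lborel (cball (0::'a) 1)"
    by (rule emeasure_mono) (auto simp: DD_def)
  also have "\<dots> < \<infinity>" using emeasure_bounded_finite[of "cball (0::'a) 1"] by simp
  finally show ?thesis .
qed

lemma sph_finite: "finite_measure (sphere_surface :: 'a::euclidean_space measure)"
proof
  have "emeasure (sphere_surface :: 'a measure) (space sphere_surface) = (\<integral>\<^sup>+x. 1 \<partial>(sphere_surface :: 'a measure))"
    by simp
  also have "\<dots> = ennreal (real DIM('a)) * (\<integral>\<^sup>+z. indicator (DD::'a set) z \<partial>lborel)"
    by (subst nn_int_sph) auto
  also have "\<dots> = ennreal (real DIM('a)) * emeasure lborel (DD::'a set)" by simp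
  also have "\<dots> \<noteq> \<infinity>" using emeasure_DD_fin[where 'a='a] by (simp add: ennreal_mult_eq_top_iff)
  finally show "emeasure (sphere_surface :: 'a measure) (space sphere_surface) \<noteq> \<infinity>" .
qed

lemma sph_integrable:
  fixes f :: "'a::euclidean_space \<Rightarrow> real"
  assumes "f \<in> borel_measurable borel" "\<And>x. norm x = 1 \<Longrightarrow> \<bar>f x\<bar> \<le> B"
  shows "integrable sphere_surface f"
proof -
  interpret finite_measure "sphere_surface :: 'a measure" by (rule sph_finite)
  have sp: "space (sphere_surface :: 'a measure) = sphere 0 1"
    by (simp add: sphere_surface_eq NN_def space_restrict_space)
  show ?thesis
    by (rule integrable_const_bound[where B=B]) (use assms sp meas_sph in auto)
qed

lemma scale_nn:
  fixes b :: "'a::euclidean_space \<Rightarrow> ennreal"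
  assumes [measurable]: "b \<in> borel_measurable borel" and R: "R > 0"
  shows "(\<integral>\<^sup>+z. indicator (cball 0 R - {0}) z * b (nrm z) \<partial>lborel)
       = ennreal (R ^ DIM('a)) * (\<integral>\<^sup>+z. indicator DD z * b (nrm z) \<partial>lborel)"
proof -
  have "(\<integral>\<^sup>+z. indicator (cball 0 R - {0}) z * b (nrm z) \<partial>lborel)
      = (\<integral>\<^sup>+z. indicator (cball 0 R - {0}) z * b (nrm z) \<partial>density (distr lborel borel (\<lambda>x. 0 + R *\<^sub>R x)) (\<lambda>_. \<bar>R\<bar>^DIM('a)))"
    using lborel_affine[of R "0::'a"] R by simp
  also have "\<dots> = (\<integral>\<^sup>+x. ennreal (\<bar>R\<bar>^DIM('a)) * (indicator (cball 0 R - {0}) (R *\<^sub>R x) * b (nrm (R *\<^sub>R x))) \<partial>lborel)"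
  proof -
    have [measurable]: "cball (0::'a) R \<in> sets borel" "{0::'a} \<in> sets borel" by auto
    have mf: "(\<lambda>z::'a. indicator (cball 0 R - {0}) z * b (nrm z)) \<in> borel_measurable borel" by measurable
    have "(\<integral>\<^sup>+z. indicator (cball 0 R - {0}) z * b (nrm z) \<partial>density (distr lborel borel (\<lambda>x. 0 + R *\<^sub>R x)) (\<lambda>_. \<bar>R\<bar>^DIM('a)))
       = (\<integral>\<^sup>+z. ennreal (\<bar>R\<bar>^DIM('a)) * (indicator (cball 0 R - {0}) z * b (nrm z)) \<partial>distr lborel borel (\<lambda>x. 0 + R *\<^sub>R x))"
      by (rule nn_integral_density) (use mf in auto)
    also have "\<dots> = (\<integral>\<^sup>+x. ennreal (\<bar>R\<bar>^DIM('a)) * (indicator (cball 0 R - {0}) (0 + R *\<^sub>R x) * b (nrm (0 + R *\<^sub>R x))) \<partial>lborel)"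
      by (rule nn_integral_distr) (use mf in auto)
    finally show ?thesis by simp
  qed
  also have "\<dots> = (\<integral>\<^sup>+x. ennreal (R^DIM('a)) * (indicator DD x * b (nrm x)) \<partial>lborel)"
  proof (intro nn_integral_cong)
    fix x :: 'a
    have "indicator (cball 0 R - {0}) (R *\<^sub>R x) = (indicator DD x :: ennreal)"
      using R by (auto simp: DD_def split: split_indicator)
    then show "ennreal (\<bar>R\<bar>^DIM('a)) * (indicator (cball 0 R - {0}) (R *\<^sub>R x) * b (nrm (R *\<^sub>R x)))
       = ennreal (R^DIM('a)) * (indicator DD x * b (nrm x))"
      using R by (simp add: nrm_scale)
  qed
  also have "\<dots> = ennreal (R ^ DIM('a)) * (\<integral>\<^sup>+z. indicator DD z * b (nrm z) \<partial>lborel)"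
    by (rule nn_integral_cmult) auto
  finally show ?thesis .
qed



lemma pw_int:
  assumes t: "t \<ge> 0" and n: "n > 0"
  shows "(\<integral>\<^sup>+r. ennreal (real n * r^(n-1)) * indicator {0<..t} r \<partial>lborel) = ennreal (t ^ n)"
proof -
  have "(\<integral>\<^sup>+r. ennreal (real n * r^(n-1)) * indicator {0<..t} r \<partial>lborel)
      = (\<integral>\<^sup>+r. ennreal (real n * r^(n-1)) * indicator {0..t} r \<partial>lborel)"
    apply (rule nn_integral_cong_AE)
    using AE_lborel_singleton[of "0::real"] by eventually_elim (auto split: split_indicator)
  also have "\<dots> = (\<lambda>r. r ^ n) t - (\<lambda>r. r ^ n) 0"
    by (rule nn_integral_FTC_Icc) (use t in \<open>auto intro!: derivative_eq_intros\<close>)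
  finally show ?thesis using n by (simp add: zero_power)
qed

definition rg :: "nat \<Rightarrow> real \<Rightarrow> ennreal" where
  "rg n r = ennreal (real n * r^(n-1)) * indicator {0<..1} r"

lemma rg_meas[measurable]: "rg n \<in> borel_measurable borel"
  unfolding rg_def by measurable

lemma radial_measure:
  fixes b :: "'a::euclidean_space \<Rightarrow> ennreal"
  assumes [measurable]: "b \<in> borel_measurable borel"
    and fin: "(\<integral>\<^sup>+z. indicator DD z * b (nrm z) \<partial>lborel) \<noteq> \<infinity>"
  shows "distr (density lborel (\<lambda>z. indicator DD z * b (nrm z))) borel norm
       = density lborel (\<lambda>r. rg DIM('a) r * (\<integral>\<^sup>+z. indicator DD z * b (nrm z) \<partial>lborel))"
    (is "?L = ?R")
proof (rule measure_eqI_lessThan)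
  define I where "I = (\<integral>\<^sup>+z. indicator DD z * b (nrm z) \<partial>lborel)"
  define d where "d = DIM('a)"
  have d0: "d > 0" unfolding d_def by simp
  show "sets ?L = sets borel" "sets ?R = sets borel" by auto
  have Lx: "emeasure ?L {x<..} = (\<integral>\<^sup>+z. indicator DD z * b (nrm z) * indicator {x<..} (norm z) \<partial>lborel)" for x
  proof -
    have m: "norm -` {x<..} \<in> sets (borel::'a measure)"
      by (rule measurable_sets_borel[OF borel_measurable_norm]) auto
    show ?thesis using m
      by (subst emeasure_distr) (auto simp: emeasure_density intro!: nn_integral_cong split: split_indicator)
  qed
  have Rx: "emeasure ?R {x<..} = I * (\<integral>\<^sup>+r. rg d r * indicator {x<..} r \<partial>lborel)" for x
    unfolding I_def d_def
    by (subst emeasure_density) (auto simp: nn_integral_cmult[symmetric] intro!: nn_integral_cong simp: ac_simps)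
  have totR: "(\<integral>\<^sup>+r. rg d r \<partial>lborel) = 1"
    unfolding rg_def using pw_int[of 1 d] d0 by simp
  show "emeasure ?L {x<..} < \<infinity>" for x
  proof -
    have "emeasure ?L {x<..} \<le> I" unfolding Lx I_def
      by (intro nn_integral_mono) (auto split: split_indicator)
    also have "\<dots> < \<infinity>" using fin by (simp add: I_def less_top)
    finally show ?thesis .
  qed
  show "emeasure ?L {x<..} = emeasure ?R {x<..}" for x
  proof (cases "x \<le> 0")
    case True
    have xz: "\<And>z::'a. z \<noteq> 0 \<Longrightarrow> x < norm z" using True by (smt (verit) zero_less_norm_iff)
    have "emeasure ?L {x<..} = I" unfolding Lx I_def using xz
      by (intro nn_integral_cong) (auto simp: DD_def split: split_indicator)
    moreover have "emeasure ?R {x<..} = I"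
    proof -
      have "(\<integral>\<^sup>+r. rg d r * indicator {x<..} r \<partial>lborel) = (\<integral>\<^sup>+r. rg d r \<partial>lborel)"
        using True by (intro nn_integral_cong) (auto simp: rg_def split: split_indicator)
      then show ?thesis unfolding Rx totR by simp
    qed
    ultimately show ?thesis by simp
  next
    case False
    show ?thesis
    proof (cases "x \<ge> 1")
      case True
      have "emeasure ?L {x<..} = 0" unfolding Lx using True
        by (subst nn_integral_cong[where v="\<lambda>_. 0"]) (auto simp: DD_def split: split_indicator)
      moreover have "emeasure ?R {x<..} = 0" unfolding Rx using True
        by (subst nn_integral_cong[where v="\<lambda>_. 0"]) (auto simp: rg_def split: split_indicator)
      ultimately show ?thesis by simp
    next
      case False
      with \<open>\<not> x \<le> 0\<close> have x: "0 < x" "x < 1" by auto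
      have "I = (\<integral>\<^sup>+z. indicator DD z * b (nrm z) * indicator {x<..} (norm z)
                 + indicator (cball 0 x - {0}) z * b (nrm z) \<partial>lborel)"
        unfolding I_def using x by (intro nn_integral_cong) (auto simp: DD_def split: split_indicator)
      also have "\<dots> = emeasure ?L {x<..} + ennreal (x ^ d) * I"
      proof -
        have [measurable]: "cball (0::'a) x \<in> sets borel" "{0::'a} \<in> sets borel" by auto
        show ?thesis unfolding Lx I_def d_def
          by (subst nn_integral_add) (auto simp: scale_nn[OF _ x(1)])
      qed
      finally have L: "emeasure ?L {x<..} + ennreal (x ^ d) * I = I" by simp
      have "(\<integral>\<^sup>+r. rg d r \<partial>lborel) = (\<integral>\<^sup>+r. rg d r * indicator {x<..} r +
              ennreal (real d * r^(d-1)) * indicator {0<..x} r \<partial>lborel)"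
        using x by (intro nn_integral_cong) (auto simp: rg_def split: split_indicator)
      also have "\<dots> = (\<integral>\<^sup>+r. rg d r * indicator {x<..} r \<partial>lborel) + 
           (\<integral>\<^sup>+r. ennreal (real d * r^(d-1)) * indicator {0<..x} r \<partial>lborel)"
        by (rule nn_integral_add) auto
      also have "\<dots> = (\<integral>\<^sup>+r. rg d r * indicator {x<..} r \<partial>lborel) + ennreal (x ^ d)"
        using pw_int[of x d] x d0 by (simp only:)
      finally have A: "(\<integral>\<^sup>+r. rg d r * indicator {x<..} r \<partial>lborel) + ennreal (x ^ d) = 1"
        using totR by simp
      have "emeasure ?R {x<..} + ennreal (x ^ d) * I = I * ((\<integral>\<^sup>+r. rg d r * indicator {x<..} r \<partial>lborel) + ennreal (x ^ d))"
        unfolding Rx by (simp add: distrib_left mult.commute)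
      then have "emeasure ?R {x<..} + ennreal (x ^ d) * I = I"
        unfolding A by simp
      with L have "emeasure ?L {x<..} + ennreal (x ^ d) * I = emeasure ?R {x<..} + ennreal (x ^ d) * I"
        by simp
      moreover have "ennreal (x ^ d) * I \<noteq> \<infinity>" using fin by (simp add: I_def ennreal_mult_eq_top_iff)
      ultimately show ?thesis
        using ennreal_add_left_cancel[of "ennreal (x ^ d) * I" "emeasure ?L {x<..}" "emeasure ?R {x<..}"]
        by (simp add: add.commute)
    qed
  qed
qed

lemma radial_nn:
  fixes b :: "'a::euclidean_space \<Rightarrow> ennreal" and h :: "real \<Rightarrow> ennreal"
  assumes [measurable]: "b \<in> borel_measurable borel" "h \<in> borel_measurable borel"
    and fin: "(\<integral>\<^sup>+z. indicator DD z * b (nrm z) \<partial>lborel) \<noteq> \<infinity>"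
  shows "(\<integral>\<^sup>+z. indicator DD z * b (nrm z) * h (norm z) \<partial>lborel)
       = (\<integral>\<^sup>+z. indicator DD z * b (nrm z) \<partial>lborel) * (\<integral>\<^sup>+r. rg DIM('a) r * h r \<partial>lborel)"
proof -
  have "(\<integral>\<^sup>+z. indicator DD z * b (nrm z) * h (norm z) \<partial>lborel)
      = (\<integral>\<^sup>+z. h z \<partial>distr (density lborel (\<lambda>z. indicator DD z * b (nrm z))) borel norm)"
    by (subst nn_integral_distr) (auto simp: nn_integral_density ac_simps)
  also have "\<dots> = (\<integral>\<^sup>+r. h r \<partial>density lborel (\<lambda>r. rg DIM('a) r * (\<integral>\<^sup>+z. indicator DD z * b (nrm z) \<partial>lborel)))"
    by (subst radial_measure[OF assms(1) fin]) simp
  also have "\<dots> = (\<integral>\<^sup>+r. (\<integral>\<^sup>+z. indicator DD z * b (nrm z) \<partial>lborel) * (rg DIM('a) r * h r) \<partial>lborel)"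
    by (subst nn_integral_density) (auto simp: ac_simps)
  also have "\<dots> = (\<integral>\<^sup>+z. indicator DD z * b (nrm z) \<partial>lborel) * (\<integral>\<^sup>+r. rg DIM('a) r * h r \<partial>lborel)"
    by (rule nn_integral_cmult) auto
  finally show ?thesis .
qed



lemma intDD:
  fixes f :: "'a::euclidean_space \<Rightarrow> real"
  assumes [measurable]: "f \<in> borel_measurable borel" and "\<And>z. \<bar>f z\<bar> \<le> K * indicator DD z"
  shows "integrable lborel f"
proof -
  have "integrable lborel (indicator (DD::'a set) :: 'a \<Rightarrow> real)"
    by (rule integrable_real_indicator) (use emeasure_DD_fin[where 'a='a] in auto)
  then have "integrable lborel (\<lambda>z::'a. K * indicator DD z)" by simp
  then show ?thesis
    by (rule Bochner_Integration.integrable_bound) (use assms(2) in \<open>auto intro!: AE_I2 order.trans[OF _ abs_ge_self]\<close>)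
qed

lemma int01:
  fixes f :: "real \<Rightarrow> real"
  assumes [measurable]: "f \<in> borel_measurable borel" and "\<And>r. \<bar>f r\<bar> \<le> K * indicator {0<..1} r"
  shows "integrable lborel f"
proof -
  have "integrable lborel (indicator {0<..1::real} :: real \<Rightarrow> real)"
    by (rule integrable_real_indicator) auto
  then have "integrable lborel (\<lambda>r::real. K * indicator {0<..1} r)" by simp
  then show ?thesis
    by (rule Bochner_Integration.integrable_bound) (use assms(2) in \<open>auto intro!: AE_I2 order.trans[OF _ abs_ge_self]\<close>)
qed

lemma radial_pos:
  fixes b :: "'a::euclidean_space \<Rightarrow> real" and h :: "real \<Rightarrow> real"
  assumes [measurable]: "b \<in> borel_measurable borel" "h \<in> borel_measurable borel"
    and bb: "\<And>w. norm w = 1 \<Longrightarrow> 0 \<le> b w \<and> b w \<le> Kb"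
    and hb: "\<And>r. 0 < r \<Longrightarrow> r \<le> 1 \<Longrightarrow> 0 \<le> h r \<and> h r \<le> Kh"
  shows "(\<integral>z. indicator DD z * h (norm z) * b (nrm z) \<partial>lborel)
       = (\<integral>r. indicator {0<..1} r * r^(DIM('a)-1) * h r \<partial>lborel) * (\<integral>x. b x \<partial>sphere_surface)"
proof -
  define d where "d = DIM('a)"
  have d0: "d > 0" by (simp add: d_def)
  have DDn: "z \<in> DD \<Longrightarrow> 0 < norm z \<and> norm z \<le> 1" for z :: 'a by (auto simp: DD_def)
  have bn: "0 \<le> b (nrm z)" "b (nrm z) \<le> Kb" for z :: 'a using bb[of "nrm z"] by auto
  have i1: "integrable lborel (\<lambda>z::'a. indicator DD z * h (norm z) * b (nrm z))"
  proof (rule intDD[where K="Kh * Kb"])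
    fix z :: 'a
    show "\<bar>indicator DD z * h (norm z) * b (nrm z)\<bar> \<le> Kh * Kb * indicator DD z"
      using hb[of "norm z"] bn[of z] DDn[of z]
      by (auto split: split_indicator simp: abs_mult intro!: mult_mono)
  qed measurable
  have i2: "integrable lborel (\<lambda>z::'a. indicator DD z * b (nrm z))"
    by (rule intDD[where K="Kb"]) (use bn in \<open>auto split: split_indicator\<close>)
  have i3: "integrable lborel (\<lambda>r. indicator {0<..1} r * r^(d-1) * h r)"
  proof (rule int01[where K="Kh"])
    fix r :: real
    have "r^(d-1) * h r \<le> Kh" if "0 < r" "r \<le> 1"
    proof -
      have "r^(d-1) \<le> 1" using that by (simp add: power_le_one)
      then have "r^(d-1) * h r \<le> 1 * h r" using hb[OF that] by (intro mult_right_mono) auto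
      then show ?thesis using hb[OF that] by simp
    qed
    then show "\<bar>indicator {0<..1} r * r^(d-1) * h r\<bar> \<le> Kh * indicator {0<..1} r"
      using hb[of r] by (auto split: split_indicator simp: abs_mult)
  qed measurable
  have n1: "0 \<le> (\<integral>z. indicator DD z * b (nrm z) \<partial>lborel)"
    by (intro integral_nonneg_AE AE_I2) (use bn in \<open>auto split: split_indicator\<close>)
  have n2: "0 \<le> (\<integral>r. real d * (indicator {0<..1} r * r^(d-1) * h r) \<partial>lborel)"
    by (intro integral_nonneg_AE AE_I2) (use hb in \<open>auto split: split_indicator\<close>)
  have n0: "0 \<le> (\<integral>z. indicator DD z * h (norm z) * b (nrm z) \<partial>lborel)"
    by (intro integral_nonneg_AE AE_I2) (use hb bn DDn in \<open>auto split: split_indicator\<close>)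
  have "ennreal (\<integral>z. indicator DD z * h (norm z) * b (nrm z) \<partial>lborel)
      = (\<integral>\<^sup>+z. ennreal (indicator DD z * h (norm z) * b (nrm z)) \<partial>lborel)"
    by (rule nn_integral_eq_integral[symmetric, OF i1])
       (use hb DDn bn in \<open>auto split: split_indicator\<close>)
  also have "\<dots> = (\<integral>\<^sup>+z. indicator DD z * ennreal (b (nrm z)) * ennreal (indicator {0<..1} (norm z) * h (norm z)) \<partial>lborel)"
  proof (intro nn_integral_cong)
    fix z :: 'a
    show "ennreal (indicator DD z * h (norm z) * b (nrm z)) =
         indicator DD z * ennreal (b (nrm z)) * ennreal (indicator {0<..1} (norm z) * h (norm z))"
    proof (cases "z \<in> DD")
      case True
      then have "0 \<le> h (norm z)" using DDn hb by auto
      then show ?thesis using True DDn[OF True] bn[of z] by (simp add: ennreal_mult mult.commute)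
    qed simp
  qed
  also have "\<dots> = (\<integral>\<^sup>+z. indicator DD z * ennreal (b (nrm z)) \<partial>lborel) *
       (\<integral>\<^sup>+r. rg DIM('a) r * ennreal (indicator {0<..1} r * h r) \<partial>lborel)"
  proof (rule radial_nn)
    have "(\<integral>\<^sup>+z. indicator DD z * ennreal (b (nrm z)) \<partial>lborel) = (\<integral>\<^sup>+z. ennreal (indicator DD z * b (nrm z)) \<partial>lborel)"
      by (intro nn_integral_cong) (auto split: split_indicator)
    also have "\<dots> = ennreal (\<integral>z. indicator DD z * b (nrm z) \<partial>lborel)"
      by (rule nn_integral_eq_integral[OF i2]) (use bn in \<open>auto split: split_indicator\<close>)
    finally show "(\<integral>\<^sup>+z. indicator DD z * ennreal (b (nrm z)) \<partial>lborel) \<noteq> \<infinity>" by simp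
  qed auto
  also have "(\<integral>\<^sup>+z. indicator DD z * ennreal (b (nrm z)) \<partial>lborel) = ennreal (\<integral>z. indicator DD z * b (nrm z) \<partial>lborel)"
  proof -
    have "(\<integral>\<^sup>+z. indicator DD z * ennreal (b (nrm z)) \<partial>lborel) = (\<integral>\<^sup>+z. ennreal (indicator DD z * b (nrm z)) \<partial>lborel)"
      by (intro nn_integral_cong) (auto split: split_indicator)
    also have "\<dots> = ennreal (\<integral>z. indicator DD z * b (nrm z) \<partial>lborel)"
      by (rule nn_integral_eq_integral[OF i2]) (use bn in \<open>auto split: split_indicator\<close>)
    finally show ?thesis .
  qed
  also have "(\<integral>\<^sup>+r. rg DIM('a) r * ennreal (indicator {0<..1} r * h r) \<partial>lborel)
      = (\<integral>\<^sup>+r. ennreal (real d * (indicator {0<..1} r * r^(d-1) * h r)) \<partial>lborel)"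
    using hb unfolding rg_def d_def
    by (intro nn_integral_cong) (auto split: split_indicator simp: ennreal_mult'' mult_ac)
  also have "\<dots> = ennreal (\<integral>r. real d * (indicator {0<..1} r * r^(d-1) * h r) \<partial>lborel)"
    by (rule nn_integral_eq_integral) (use i3 hb in \<open>auto split: split_indicator\<close>)
  finally have "ennreal (\<integral>z. indicator DD z * h (norm z) * b (nrm z) \<partial>lborel)
      = ennreal ((\<integral>z. indicator DD z * b (nrm z) \<partial>lborel) * (\<integral>r. real d * (indicator {0<..1} r * r^(d-1) * h r) \<partial>lborel))"
  proof -
    assume "ennreal (\<integral>z. indicator DD z * h (norm z) * b (nrm z) \<partial>lborel) =
      ennreal (\<integral>z. indicator DD z * b (nrm z) \<partial>lborel) * ennreal (\<integral>r. real d * (indicator {0<..1} r * r^(d-1) * h r) \<partial>lborel)"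
    then show ?thesis using n1 n2 by (simp add: ennreal_mult)
  qed
  then have "(\<integral>z. indicator DD z * h (norm z) * b (nrm z) \<partial>lborel)
      = (\<integral>z. indicator DD z * b (nrm z) \<partial>lborel) * (\<integral>r. real d * (indicator {0<..1} r * r^(d-1) * h r) \<partial>lborel)"
    by (subst (asm) ennreal_inj) (use n0 n1 n2 in auto)
  also have "\<dots> = (\<integral>r. indicator {0<..1} r * r^(d-1) * h r \<partial>lborel) * (\<integral>x. b x \<partial>sphere_surface)"
    by (simp add: int_sph d_def)
  finally show ?thesis by (simp add: d_def)
qed



lemma radial_real:
  fixes b :: "'a::euclidean_space \<Rightarrow> real" and h :: "real \<Rightarrow> real"
  assumes [measurable]: "b \<in> borel_measurable borel" "h \<in> borel_measurable borel"
    and bb: "\<And>w. norm w = 1 \<Longrightarrow> \<bar>b w\<bar> \<le> Kb"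
    and hb: "\<And>r. 0 < r \<Longrightarrow> r \<le> 1 \<Longrightarrow> 0 \<le> h r \<and> h r \<le> Kh"
  shows "(\<integral>z. indicator DD z * h (norm z) * b (nrm z) \<partial>lborel)
       = (\<integral>r. indicator {0<..1} r * r^(DIM('a)-1) * h r \<partial>lborel) * (\<integral>x. b x \<partial>sphere_surface)"
proof -
  define bp where "bp w = max (b w) 0" for w
  define bm where "bm w = max (- b w) 0" for w
  have [measurable]: "bp \<in> borel_measurable borel" "bm \<in> borel_measurable borel"
    unfolding bp_def bm_def by measurable
  have bpb: "0 \<le> bp w \<and> bp w \<le> Kb" "0 \<le> bm w \<and> bm w \<le> Kb" if "norm w = 1" for w
    using bb[OF that] by (auto simp: bp_def bm_def)
  have beq: "b w = bp w - bm w" for w by (simp add: bp_def bm_def)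
  have hDD: "\<bar>h (norm z)\<bar> \<le> Kh" if "z \<in> DD" for z :: 'a
    using hb[of "norm z"] that by (auto simp: DD_def)
  have hK: "0 \<le> Kh" if "z \<in> DD" for z :: 'a using hDD[OF that] by linarith
  have ip: "integrable lborel (\<lambda>z::'a. indicator DD z * h (norm z) * bp (nrm z))"
    by (rule intDD[where K="Kh*Kb"]) (use hK hDD bpb(1) in \<open>auto split: split_indicator simp: abs_mult intro!: mult_mono\<close>)
  have im: "integrable lborel (\<lambda>z::'a. indicator DD z * h (norm z) * bm (nrm z))"
    by (rule intDD[where K="Kh*Kb"]) (use hK hDD bpb(2) in \<open>auto split: split_indicator simp: abs_mult intro!: mult_mono\<close>)
  have "(\<integral>z. indicator DD z * h (norm z) * b (nrm z) \<partial>lborel)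
      = (\<integral>z. indicator DD z * h (norm z) * bp (nrm z) - indicator DD z * h (norm z) * bm (nrm z) \<partial>lborel)"
    by (simp add: beq algebra_simps)
  also have "\<dots> = (\<integral>z. indicator DD z * h (norm z) * bp (nrm z) \<partial>lborel) - (\<integral>z. indicator DD z * h (norm z) * bm (nrm z) \<partial>lborel)"
    by (rule Bochner_Integration.integral_diff[OF ip im])
  also have "\<dots> = (\<integral>r. indicator {0<..1} r * r^(DIM('a)-1) * h r \<partial>lborel) * ((\<integral>x. bp x \<partial>sphere_surface) - (\<integral>x. bm x \<partial>sphere_surface))"
  proof -
    have e1: "(\<integral>z. indicator DD z * h (norm z) * bp (nrm z) \<partial>lborel) = (\<integral>r. indicator {0<..1} r * r^(DIM('a)-1) * h r \<partial>lborel) * (\<integral>x. bp x \<partial>sphere_surface)"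
      by (rule radial_pos[where Kb=Kb and Kh=Kh]) (use bpb hb in auto)
    have e2: "(\<integral>z. indicator DD z * h (norm z) * bm (nrm z) \<partial>lborel) = (\<integral>r. indicator {0<..1} r * r^(DIM('a)-1) * h r \<partial>lborel) * (\<integral>x. bm x \<partial>sphere_surface)"
      by (rule radial_pos[where Kb=Kb and Kh=Kh]) (use bpb hb in auto)
    show ?thesis unfolding e1 e2 by (simp add: right_diff_distrib)
  qed
  also have "(\<integral>x. bp x \<partial>sphere_surface) - (\<integral>x. bm x \<partial>sphere_surface) = (\<integral>x. b x \<partial>(sphere_surface::'a measure))"
  proof -
    have "integrable (sphere_surface::'a measure) bp"
      by (rule sph_integrable[where B=Kb]) (use bpb in auto)
    moreover have "integrable (sphere_surface::'a measure) bm"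
      by (rule sph_integrable[where B=Kb]) (use bpb in auto)
    ultimately show ?thesis by (simp add: beq Bochner_Integration.integral_diff)
  qed
  finally show ?thesis .
qed

lemma powint:
  assumes p: "p \<ge> 0" and n: "n \<ge> 1"
  shows "(\<integral>r. indicator {0<..1} r * r^(n-1) * r powr p \<partial>lborel) = 1 / (p + real n)"
proof -
  define q where "q = p + real n - 1"
  have q: "q \<ge> 0" using p n by (simp add: q_def)
  have hi: "((\<lambda>x. x powr q) has_integral (1 powr (q+1) / (q+1))) {0..1}"
    by (rule has_integral_powr_from_0) (use q in auto)
  have "(\<integral>\<^sup>+x. ennreal (x powr q) * indicator {0..1} x \<partial>lborel) = ennreal (1 / (q+1))"
    using nn_integral_has_integral_lebesgue'[OF _ hi] by simp
  moreover have "(\<integral>\<^sup>+x. ennreal (x powr q * indicator {0..1} x) \<partial>lborel) = (\<integral>\<^sup>+x. ennreal (x powr q) * indicator {0..1} x \<partial>lborel)"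
    by (intro nn_integral_cong) (auto split: split_indicator)
  ultimately have hb: "has_bochner_integral lborel (\<lambda>x. x powr q * indicator {0..1} x) (1 / (q+1))"
    by (intro has_bochner_integral_nn_integral) (use q in \<open>auto split: split_indicator\<close>)
  have "(\<integral>r. indicator {0<..1} r * r^(n-1) * r powr p \<partial>lborel) = (\<integral>x. x powr q * indicator {0..1} x \<partial>lborel)"
  proof (rule integral_cong_AE)
    show "AE x in lborel. indicator {0<..1} x * x^(n-1) * x powr p = x powr q * indicator {0..1} x"
      using AE_lborel_singleton[of "0::real"]
    proof eventually_elim
      case (elim x)
      show ?case
      proof (cases "x \<in> {0<..1}")
        case True
        then have "x^(n-1) = x powr (real (n-1))" by (simp add: powr_realpow)
        then have "x^(n-1) * x powr p = x powr (real (n-1) + p)" by (simp add: powr_add)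
        also have "real (n-1) + p = q" using n by (simp add: q_def of_nat_diff)
        finally have "x^(n-1) * x powr p = x powr q" .
        then show ?thesis using True by simp
      qed (use elim in auto)
    qed
  qed measurable
  also have "\<dots> = 1 / (q+1)" using hb by (simp add: has_bochner_integral_integral_eq)
  finally show ?thesis by (simp add: q_def)
qed



lemma int_bsupp:
  fixes f :: "'a::euclidean_space \<Rightarrow> real"
  assumes [measurable]: "f \<in> borel_measurable borel" and "\<And>z. \<bar>f z\<bar> \<le> K" and "\<And>z. norm z > R \<Longrightarrow> f z = 0"
  shows "integrable lborel f"
proof (rule integrableI_bounded_set[where A="cball 0 R" and B=K])
  show "emeasure lborel (cball (0::'a) R) < \<infinity>" using emeasure_bounded_finite[of "cball (0::'a) R"] by simp
qed (use assms in auto)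

lemma ibp:
  fixes \<Phi> g :: "'a::euclidean_space \<Rightarrow> real" and v :: 'a
  assumes [measurable]: "\<Phi> \<in> borel_measurable borel" "g \<in> borel_measurable borel"
    and bP: "\<And>z. \<bar>\<Phi> z\<bar> \<le> K" and bg: "\<And>z. \<bar>g z\<bar> \<le> K"
    and sP: "\<And>z. norm z > 1 \<Longrightarrow> \<Phi> z = 0" and sg: "\<And>z. norm z > 1 \<Longrightarrow> g z = 0"
    and ae: "AE x in lborel. continuous_on {0..1} (\<lambda>s. \<Phi> (x + s *\<^sub>R v)) \<and>
        (\<exists>S. finite S \<and> (\<forall>s\<in>{0<..<1}-S. ((\<lambda>s. \<Phi> (x + s *\<^sub>R v)) has_real_derivative g (x + s *\<^sub>R v)) (at s)))"
  shows "(\<integral>z. g z \<partial>lborel) = 0"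
proof -
  have PS: "pair_sigma_finite (lborel::'a measure) (lborel::real measure)"
    by (simp add: pair_sigma_finite_def lborel.sigma_finite_measure_axioms)
  define F where "F x s = indicator {0..1} s * g (x + s *\<^sub>R v)" for x :: 'a and s :: real
  have [measurable]: "case_prod F \<in> borel_measurable (lborel \<Otimes>\<^sub>M lborel)"
    unfolding F_def by measurable
  have iF: "integrable (lborel \<Otimes>\<^sub>M lborel) (case_prod F)"
  proof (rule integrableI_bounded_set[where A="cball 0 (1 + norm v) \<times> {0..1}" and B=K])
    show "emeasure (lborel \<Otimes>\<^sub>M lborel) (cball (0::'a) (1 + norm v) \<times> {0..1::real}) < \<infinity>"
      using emeasure_bounded_finite[of "cball (0::'a) (1 + norm v)"]
      by (subst lborel.emeasure_pair_measure_Times) (auto simp: ennreal_mult_less_top)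
    show "AE x in lborel \<Otimes>\<^sub>M lborel. x \<in> cball 0 (1 + norm v) \<times> {0..1} \<longrightarrow> norm (case_prod F x) \<le> K"
      using bg by (auto simp: F_def split: split_indicator)
    show "AE x in lborel \<Otimes>\<^sub>M lborel. x \<notin> cball 0 (1 + norm v) \<times> {0..1} \<longrightarrow> case_prod F x = 0"
    proof (intro AE_I2 impI)
      fix p :: "'a \<times> real" assume p: "p \<notin> cball 0 (1 + norm v) \<times> {0..1}"
      obtain x s where ps: "p = (x, s)" by (cases p)
      show "case_prod F p = 0"
      proof (cases "s \<in> {0..1}")
        case True
        then have "norm x > 1 + norm v" using p ps by auto
        moreover have "norm (s *\<^sub>R v) \<le> norm v" using True by (auto intro: mult_left_le_one_le)
        moreover have "norm x \<le> norm (x + s *\<^sub>R v) + norm (s *\<^sub>R v)"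
          using norm_triangle_ineq4[of "x + s *\<^sub>R v" "s *\<^sub>R v"] by simp
        ultimately have "norm (x + s *\<^sub>R v) > 1" by linarith
        then show ?thesis using sg ps by (simp add: F_def)
      qed (simp add: F_def ps)
    qed
  qed auto
  have iP: "integrable lborel \<Phi>" by (rule int_bsupp[OF _ bP sP]) simp
  have ig: "integrable lborel g" by (rule int_bsupp[OF _ bg sg]) simp
  have inner: "(\<integral>s. F x s \<partial>lborel) = \<Phi> (x + v) - \<Phi> x"
    if c: "continuous_on {0..1} (\<lambda>s. \<Phi> (x + s *\<^sub>R v))"
      and S: "finite S" "\<forall>s\<in>{0<..<1}-S. ((\<lambda>s. \<Phi> (x + s *\<^sub>R v)) has_real_derivative g (x + s *\<^sub>R v)) (at s)"
    for x S
  proof -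
    have hi: "((\<lambda>s. g (x + s *\<^sub>R v)) has_integral (\<Phi> (x + 1 *\<^sub>R v) - \<Phi> (x + 0 *\<^sub>R v))) {0..1}"
      by (rule fundamental_theorem_of_calculus_interior_strong[OF S(1)])
         (use S(2) c in \<open>auto simp: has_real_derivative_iff_has_vector_derivative\<close>)
    have si: "set_integrable lborel {0..1} (\<lambda>s. g (x + s *\<^sub>R v))"
      unfolding set_integrable_def
      by (rule integrableI_bounded_set[where A="{0..1}" and B=K]) (use bg in \<open>auto split: split_indicator\<close>)
    have "(\<integral>s. F x s \<partial>lborel) = (LINT s:{0..1}|lborel. g (x + s *\<^sub>R v))"
      by (simp add: F_def set_lebesgue_integral_def)
    also have "\<dots> = integral {0..1} (\<lambda>s. g (x + s *\<^sub>R v))"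
      by (rule set_borel_integral_eq_integral(2)[OF si])
    also have "\<dots> = \<Phi> (x + v) - \<Phi> x" using integral_unique[OF hi] by simp
    finally show ?thesis .
  qed
  have "(\<integral>s. (\<integral>x. F x s \<partial>lborel) \<partial>lborel) = (\<integral>x. (\<integral>s. F x s \<partial>lborel) \<partial>lborel)"
    by (rule pair_sigma_finite.Fubini_integral[OF PS iF])
  also have "\<dots> = (\<integral>x. \<Phi> (x + v) - \<Phi> x \<partial>lborel)"
  proof (rule integral_cong_AE)
    show "AE x in lborel. (\<integral>s. F x s \<partial>lborel) = \<Phi> (x + v) - \<Phi> x"
      using ae by eventually_elim (use inner in blast)
  qed auto
  also have "\<dots> = (\<integral>x. \<Phi> (v + x) \<partial>lborel) - (\<integral>x. \<Phi> x \<partial>lborel)"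
  proof -
    have i1: "integrable lborel (\<lambda>x. \<Phi> (x + v))"
    proof (rule int_bsupp[where K=K and R="1 + norm v"])
      fix z :: 'a assume "norm z > 1 + norm v"
      moreover have "norm z \<le> norm (z + v) + norm v"
        using norm_triangle_ineq4[of "z + v" v] by simp
      ultimately have "norm (z + v) > 1" by linarith
      then show "\<Phi> (z + v) = 0" by (rule sP)
    qed (use bP in auto)
    show ?thesis using Bochner_Integration.integral_diff[OF i1 iP] by (simp add: add.commute)
  qed
  also have "(\<integral>x. \<Phi> (v + x) \<partial>lborel) = (\<integral>x. \<Phi> x \<partial>lborel)"
  proof -
    have "(\<integral>x. \<Phi> x \<partial>lborel) = (\<integral>x. \<Phi> x \<partial>distr lborel borel ((+) v))"
      by (simp add: lborel_distr_plus)
    also have "\<dots> = (\<integral>x. \<Phi> (v + x) \<partial>lborel)"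
      by (rule integral_distr) auto
    finally show ?thesis by simp
  qed
  finally have "(\<integral>s. (\<integral>x. F x s \<partial>lborel) \<partial>lborel) = 0" by simp
  moreover have "(\<integral>s. (\<integral>x. F x s \<partial>lborel) \<partial>lborel) = (\<integral>s. indicator {0..1::real} s * (\<integral>z. g z \<partial>lborel) \<partial>lborel)"
  proof -
    have "(\<integral>x. F x s \<partial>lborel) = indicator {0..1} s * (\<integral>z. g z \<partial>lborel)" for s :: real
    proof -
    have "(\<integral>x. g (x + s *\<^sub>R v) \<partial>lborel) = (\<integral>z. g z \<partial>lborel)"
    proof -
      have "(\<integral>x. g x \<partial>lborel) = (\<integral>x. g x \<partial>distr lborel borel ((+) (s *\<^sub>R v)))"
        by (simp add: lborel_distr_plus)
      also have "\<dots> = (\<integral>x. g (s *\<^sub>R v + x) \<partial>lborel)"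
        by (rule integral_distr) auto
      finally show ?thesis by (simp add: add.commute)
    qed
    then show "(\<integral>x. F x s \<partial>lborel) = indicator {0..1} s * (\<integral>z. g z \<partial>lborel)"
      by (simp add: F_def)
    qed
    then have "(\<lambda>s. \<integral>x. F x s \<partial>lborel) = (\<lambda>s. indicator {0..1} s * (\<integral>z. g z \<partial>lborel))" by (rule ext)
    then show ?thesis by metis
  qed
  moreover have "\<dots> = (\<integral>z. g z \<partial>lborel)"
    by (simp add: integral_mult_left_zero del: integral_mult_left_zero)
  ultimately show ?thesis by simp
qed



definition Pk :: "real \<Rightarrow> real \<Rightarrow> real" where
  "Pk k y = (if k = 0 then 1 else y powr k)"

definition GG :: "'a::euclidean_space \<Rightarrow> 'a \<Rightarrow> real" where
  "GG m z = norm z + m \<bullet> z"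

lemma Pk_meas[measurable]: "Pk k \<in> borel_measurable borel"
  unfolding Pk_def by measurable

lemma GG_meas[measurable]: "GG m \<in> borel_measurable borel"
  unfolding GG_def by measurable

lemma Pk_nonneg: "0 \<le> Pk k y" by (simp add: Pk_def)

lemma Pk_le: assumes "0 \<le> y" "y \<le> 2" "0 \<le> k" shows "Pk k y \<le> 2 powr k"
  using assms by (auto simp: Pk_def intro!: powr_mono2)

lemma ps_unnorm_Pk: "ps_unnorm k m x = Pk k (1 + m \<bullet> x)"
  by (simp add: ps_unnorm_def Pk_def)

lemma GG_nonneg: assumes "norm m = 1" shows "0 \<le> GG m z"
proof -
  have "\<bar>m \<bullet> z\<bar> \<le> norm z" using Cauchy_Schwarz_ineq2[of m z] assms by simp
  then show ?thesis by (simp add: GG_def)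
qed

lemma GG_le: assumes "norm m = 1" shows "GG m z \<le> 2 * norm z"
proof -
  have "\<bar>m \<bullet> z\<bar> \<le> norm z" using Cauchy_Schwarz_ineq2[of m z] assms by simp
  then show ?thesis by (simp add: GG_def)
qed

lemma inner_nrm_bound: assumes "norm m = 1" shows "\<bar>m \<bullet> nrm z\<bar> \<le> 1"
  using Cauchy_Schwarz_ineq2[of m "nrm z"] assms by simp

lemma Gpos:
  assumes m: "norm m = 1" and z: "z \<notin> range (\<lambda>t. t *\<^sub>R m)"
  shows "GG m z > 0" "z \<noteq> 0"
proof -
  show z0: "z \<noteq> 0" using z by (metis rangeI scale_zero_left)
  have le: "\<bar>m \<bullet> z\<bar> \<le> norm z" using Cauchy_Schwarz_ineq2[of m z] m by simp
  have "\<bar>m \<bullet> z\<bar> \<noteq> norm m * norm z"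
  proof
    assume "\<bar>m \<bullet> z\<bar> = norm m * norm z"
    then have "norm m *\<^sub>R z = norm z *\<^sub>R m \<or> norm m *\<^sub>R z = - norm z *\<^sub>R m"
      by (subst (asm) norm_cauchy_schwarz_abs_eq) auto
    then have "z = norm z *\<^sub>R m \<or> z = (- norm z) *\<^sub>R m" using m by auto
    then obtain t where "z = t *\<^sub>R m" by (metis scaleR_minus_left)
    then show False using z by auto
  qed
  then have "\<bar>m \<bullet> z\<bar> < norm z" using le m by simp
  then show "GG m z > 0" by (simp add: GG_def)
qed

lemma decomp_Pk:
  assumes m: "norm m = 1" and z: "z \<noteq> 0" and k: "0 \<le> k"
  shows "Pk k (GG m z) = norm z powr k * Pk k (1 + m \<bullet> nrm z)"
proof -
  have G: "GG m z = norm z * (1 + m \<bullet> nrm z)" using z by (simp add: GG_def nrm_eq algebra_simps)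
  have "0 \<le> 1 + m \<bullet> nrm z" using inner_nrm_bound[OF m, of z] by linarith
  then show ?thesis using z unfolding G Pk_def by (auto simp: powr_mult)
qed

lemma span_null:
  assumes "DIM('a::euclidean_space) \<ge> 2"
  shows "range (\<lambda>t. t *\<^sub>R (m::'a)) \<in> null_sets lborel"
proof -
  have r: "range (\<lambda>t. t *\<^sub>R m) = span {m}" by (simp add: span_singleton image_def)
  have "dim (span {m}) \<le> 1" using dim_le_card'[of "{m}"] by (simp add: dim_span)
  then have "dim (range (\<lambda>t. t *\<^sub>R m)) < DIM('a)" using assms r by simp
  then have "negligible (range (\<lambda>t. t *\<^sub>R m))" by (rule negligible_lowdim)
  moreover have "range (\<lambda>t. t *\<^sub>R m) \<in> sets borel" unfolding r by (simp add: closed_span)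
  ultimately show ?thesis
    by (auto simp: null_sets_completion_iff negligible_iff_null_sets)
qed

lemma quad_finite:
  assumes "A2 \<noteq> (0::real)"
  shows "finite {s. A0 + 2 * s * A1 + s^2 * A2 = 1}"
proof -
  let ?p = "A1 / A2" and ?R = "(1 - A0) / A2 + (A1 / A2)^2"
  have "{s. A0 + 2 * s * A1 + s^2 * A2 = 1} \<subseteq> {- ?p + sqrt ?R, - ?p - sqrt ?R}"
  proof
    fix s assume "s \<in> {s. A0 + 2 * s * A1 + s^2 * A2 = 1}"
    then have e: "A0 + 2 * s * A1 + s^2 * A2 = 1" by simp
    have "s^2 * A2 = 1 - A0 - 2 * s * A1" using e by linarith
    then have "s^2 = (1 - A0 - 2 * s * A1) / A2" using assms by (simp add: eq_divide_eq)
    then have e2: "s^2 = (1 - A0) / A2 - 2 * s * ?p" by (simp add: diff_divide_distrib)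
    have "(s + ?p)^2 = s^2 + 2 * s * ?p + ?p^2" by (simp add: power2_sum)
    then have "(s + ?p)^2 = ?R" using e2 by simp
    then have "\<bar>s + ?p\<bar> = sqrt ?R" by (metis real_sqrt_abs)
    then show "s \<in> {- ?p + sqrt ?R, - ?p - sqrt ?R}" by (auto simp: abs_if split: if_splits)
  qed
  then show ?thesis by (rule finite_subset) simp
qed

lemma sphere_line_finite:
  fixes x v :: "'a::euclidean_space"
  assumes "v \<noteq> 0"
  shows "finite {s. norm (x + s *\<^sub>R v) = 1}"
proof -
  have "norm (x + s *\<^sub>R v) = 1 \<longleftrightarrow> (x \<bullet> x) + 2 * s * (x \<bullet> v) + s^2 * (v \<bullet> v) = 1" for s
  proof -
    have "(norm (x + s *\<^sub>R v))^2 = (x + s *\<^sub>R v) \<bullet> (x + s *\<^sub>R v)"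
      by (simp only: power2_norm_eq_inner)
    also have "\<dots> = (x \<bullet> x) + 2 * s * (x \<bullet> v) + s^2 * (v \<bullet> v)"
      by (simp add: inner_add_left inner_add_right inner_commute[of v x] power2_eq_square algebra_simps)
    finally have "(norm (x + s *\<^sub>R v))^2 = (x \<bullet> x) + 2 * s * (x \<bullet> v) + s^2 * (v \<bullet> v)" .
    moreover have "norm (x + s *\<^sub>R v) = 1 \<longleftrightarrow> (norm (x + s *\<^sub>R v))^2 = 1"
    proof -
      have "norm (x + s *\<^sub>R v) \<noteq> -1" using norm_ge_zero[of "x + s *\<^sub>R v"] by linarith
      then show ?thesis by (auto simp: power2_eq_1_iff)
    qed
    ultimately show ?thesis by simp
  qed
  then have "{s. norm (x + s *\<^sub>R v) = 1} = {s. (x \<bullet> x) + 2 * s * (x \<bullet> v) + s^2 * (v \<bullet> v) = 1}" by auto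
  moreover have "v \<bullet> v \<noteq> 0" using assms by simp
  ultimately show ?thesis using quad_finite by simp
qed

lemma span_line_finite:
  assumes "w \<noteq> 0" "w \<bullet> m = 0"
  shows "finite {s. x + s *\<^sub>R w \<in> range (\<lambda>t. t *\<^sub>R m)}"
proof (cases "{s. x + s *\<^sub>R w \<in> range (\<lambda>t. t *\<^sub>R m)} = {}")
  case False
  then obtain s0 t0 where s0: "x + s0 *\<^sub>R w = t0 *\<^sub>R m" by auto
  have "{s. x + s *\<^sub>R w \<in> range (\<lambda>t. t *\<^sub>R m)} \<subseteq> {s0}"
  proof
    fix s assume "s \<in> {s. x + s *\<^sub>R w \<in> range (\<lambda>t. t *\<^sub>R m)}"
    then obtain t where t: "x + s *\<^sub>R w = t *\<^sub>R m" by auto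
    have "(x + s *\<^sub>R w) - (x + s0 *\<^sub>R w) = t *\<^sub>R m - t0 *\<^sub>R m" using s0 t by simp
    then have "(s - s0) *\<^sub>R w = (t - t0) *\<^sub>R m" by (simp add: scaleR_diff_left)
    then have "((s - s0) *\<^sub>R w) \<bullet> w = ((t - t0) *\<^sub>R m) \<bullet> w" by simp
    then have "(s - s0) * (w \<bullet> w) = 0" using assms(2) by (simp add: inner_commute)
    then show "s \<in> {s0}" using assms(1) by simp
  qed
  then show ?thesis by (rule finite_subset) simp
qed simp



lemma Pk_deriv:
  assumes k: "0 \<le> k" and d: "(G has_real_derivative G') (at s)" and pos: "G s > 0"
  shows "((\<lambda>t. Pk k (G t)) has_real_derivative Pk k (G s) * (k * G' / G s)) (at s)"
proof (cases "k = 0")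
  case True then show ?thesis by (simp add: Pk_def)
next
  case False
  have "((\<lambda>t. G t powr k) has_real_derivative G s powr k * (0 * ln (G s) + G' * k / G s)) (at s)"
    by (rule DERIV_powr[OF d pos DERIV_const])
  then show ?thesis using False by (simp add: Pk_def mult.commute)
qed

lemma norm_line_deriv:
  fixes x v :: "'a::euclidean_space"
  assumes z: "x + s *\<^sub>R v \<noteq> 0"
  shows "((\<lambda>t. norm (x + t *\<^sub>R v)) has_real_derivative ((x + s *\<^sub>R v) \<bullet> v / norm (x + s *\<^sub>R v))) (at s)"
proof -
  have l: "((\<lambda>t. x + t *\<^sub>R v) has_derivative (\<lambda>t. t *\<^sub>R v)) (at s)"
    by (auto intro!: derivative_eq_intros)
  have n: "(norm has_derivative (\<lambda>h. h \<bullet> sgn (x + s *\<^sub>R v))) (at (x + s *\<^sub>R v))"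
    using has_derivative_norm[OF z] .
  have "((\<lambda>t. norm (x + t *\<^sub>R v)) has_derivative (\<lambda>t. (t *\<^sub>R v) \<bullet> sgn (x + s *\<^sub>R v))) (at s)"
    using has_derivative_compose[OF l n] by simp
  moreover have "(\<lambda>t. (t *\<^sub>R v) \<bullet> sgn (x + s *\<^sub>R v)) = (*) ((x + s *\<^sub>R v) \<bullet> v / norm (x + s *\<^sub>R v))"
    by (rule ext) (simp add: sgn_div_norm inner_commute divide_inverse mult_ac)
  ultimately show ?thesis by (simp add: has_field_derivative_def)
qed

lemma inner_line_deriv:
  fixes x v m :: "'a::euclidean_space"
  shows "((\<lambda>t. m \<bullet> (x + t *\<^sub>R v)) has_real_derivative (m \<bullet> v)) (at s)"
proof -
  have "(\<lambda>t. m \<bullet> (x + t *\<^sub>R v)) = (\<lambda>t. m \<bullet> x + t * (m \<bullet> v))" by (rule ext) (simp add: inner_simps)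
  moreover have "((\<lambda>t. m \<bullet> x + t * (m \<bullet> v)) has_real_derivative (m \<bullet> v)) (at s)"
    by (auto intro!: derivative_eq_intros)
  ultimately show ?thesis by simp
qed

definition PhiA :: "real \<Rightarrow> 'a::euclidean_space \<Rightarrow> real \<Rightarrow> 'a \<Rightarrow> 'a \<Rightarrow> real" where
  "PhiA k m c w z = Pk k (GG m z) * norm z * max 0 (1 - (norm z)^2) * (c + w \<bullet> z)"

definition gA :: "real \<Rightarrow> 'a::euclidean_space \<Rightarrow> real \<Rightarrow> 'a \<Rightarrow> 'a \<Rightarrow> real" where
  "gA k m c w z = (if norm z \<le> 1 then Pk k (GG m z) * ((k + (m \<bullet> z) / norm z) * (1 - (norm z)^2) - 2 * (m \<bullet> z) * norm z) * (c + w \<bullet> z) else 0)"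

definition PhiB :: "real \<Rightarrow> 'a::euclidean_space \<Rightarrow> 'a \<Rightarrow> real" where
  "PhiB k m z = Pk k (GG m z) * GG m z * max 0 (1 - (norm z)^2)"

definition gB :: "real \<Rightarrow> 'a::euclidean_space \<Rightarrow> 'a \<Rightarrow> 'a \<Rightarrow> real" where
  "gB k m w z = (if norm z \<le> 1 then Pk k (GG m z) * ((k + 1) * (w \<bullet> z / norm z) * (1 - (norm z)^2) - 2 * GG m z * (w \<bullet> z)) else 0)"

lemma Pk_cont:
  assumes m: "norm m = 1" and k: "0 \<le> k"
  shows "continuous_on UNIV (\<lambda>z::'a::euclidean_space. Pk k (GG m z))"
proof (cases "k = 0")
  case True then show ?thesis by (simp add: Pk_def)
next
  case False
  have c: "continuous_on UNIV (GG m)" unfolding GG_def by (intro continuous_intros)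
  have "continuous_on UNIV (\<lambda>z. GG m z powr k)"
    by (rule continuous_on_powr'[OF c continuous_on_const]) (use GG_nonneg[OF m] False k in auto)
  then show ?thesis using False by (simp add: Pk_def)
qed

lemma lineA:
  fixes x m w :: "'a::euclidean_space"
  assumes m: "norm m = 1" and wm: "w \<bullet> m = 0" and k: "0 \<le> k"
    and x: "x + s *\<^sub>R m \<notin> range (\<lambda>t. t *\<^sub>R m)" and s1: "norm (x + s *\<^sub>R m) \<noteq> 1"
  shows "((\<lambda>t. PhiA k m c w (x + t *\<^sub>R m)) has_real_derivative gA k m c w (x + s *\<^sub>R m)) (at s)"
proof -
  define z where "z = x + s *\<^sub>R m"
  have G0: "GG m z > 0" and z0: "z \<noteq> 0" using Gpos[OF m x] by (auto simp: z_def)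
  define N where "N = norm z"
  have N0: "N > 0" using z0 by (simp add: N_def)
  define a where "a = m \<bullet> z"
  have Ga: "GG m z = N + a" by (simp add: GG_def N_def a_def)
  have wl: "w \<bullet> (x + t *\<^sub>R m) = w \<bullet> x" for t using wm by (simp add: inner_simps)
  have dN: "((\<lambda>t. norm (x + t *\<^sub>R m)) has_real_derivative a / N) (at s)"
    using norm_line_deriv[of x s m] z0 by (simp add: z_def a_def N_def inner_commute)
  have dG: "((\<lambda>t. GG m (x + t *\<^sub>R m)) has_real_derivative a / N + 1) (at s)"
  proof -
    have "((\<lambda>t. norm (x + t *\<^sub>R m) + m \<bullet> (x + t *\<^sub>R m)) has_real_derivative a / N + m \<bullet> m) (at s)"
      by (rule DERIV_add[OF dN inner_line_deriv])
    then show ?thesis using m by (simp add: GG_def[abs_def] inner_commute power2_norm_eq_inner[symmetric] norm_eq_1)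
  qed
  have dP: "((\<lambda>t. Pk k (GG m (x + t *\<^sub>R m))) has_real_derivative Pk k (GG m z) * k / N) (at s)"
  proof -
    have "((\<lambda>t. Pk k (GG m (x + t *\<^sub>R m))) has_real_derivative Pk k (GG m z) * (k * (a / N + 1) / GG m z)) (at s)"
      using Pk_deriv[OF k dG] G0 by (simp add: z_def)
    moreover have "k * (a / N + 1) / GG m z = k / N"
    proof -
      have n1: "N \<noteq> 0" "N + a \<noteq> 0" using N0 G0 Ga by auto
      have n2: "N * N + N * a \<noteq> 0" using n1 by (metis distrib_left mult_eq_0_iff)
      have "a / N + 1 = (N + a) / N" using n1 by (simp add: field_simps)
      then have "(a / N + 1) / GG m z = 1 / N" using n1 n2 by (simp add: Ga field_simps)
      then show ?thesis by (metis times_divide_eq_right mult.right_neutral)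
    qed
    ultimately show ?thesis by simp
  qed
  show ?thesis
  proof (cases "N < 1")
    case True
    define F where "F t = Pk k (GG m (x + t *\<^sub>R m)) * norm (x + t *\<^sub>R m) * (1 - (norm (x + t *\<^sub>R m))^2) * (c + w \<bullet> x)" for t
    have dF: "(F has_real_derivative gA k m c w z) (at s)"
    proof -
      have "(F has_real_derivative
         ((Pk k (GG m z) * k / N * N + a / N * Pk k (GG m z)) * (1 - N^2) + (- (2 * N * (a / N))) * (Pk k (GG m z) * N)) * (c + w \<bullet> x)) (at s)"
        unfolding F_def
        by (rule derivative_eq_intros dP dN refl | simp add: z_def N_def)+
      moreover have "((Pk k (GG m z) * k / N * N + a / N * Pk k (GG m z)) * (1 - N^2) + (- (2 * N * (a / N))) * (Pk k (GG m z) * N)) * (c + w \<bullet> x)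
          = gA k m c w z"
        using N0 True wl[of s] by (simp add: gA_def N_def[symmetric] a_def[symmetric] z_def[symmetric] field_simps)
      ultimately show ?thesis by simp
    qed
    show ?thesis
    proof (rule has_field_derivative_transform_within_open[OF _ _ _ ])
      show "(F has_real_derivative gA k m c w (x + s *\<^sub>R m)) (at s)" using dF by (simp add: z_def)
      show "open {t. norm (x + t *\<^sub>R m) < 1}"
        by (intro open_Collect_less continuous_intros)
      show "s \<in> {t. norm (x + t *\<^sub>R m) < 1}" using True by (simp add: N_def z_def)
      fix t assume "t \<in> {t. norm (x + t *\<^sub>R m) < 1}"
      then have "(norm (x + t *\<^sub>R m))^2 \<le> 1" by (intro power_le_one) auto
      then show "F t = PhiA k m c w (x + t *\<^sub>R m)"
        by (simp add: F_def PhiA_def wl max_def)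
    qed
  next
    case False
    then have N1: "N > 1" using s1 by (simp add: N_def z_def)
    show ?thesis
    proof (rule has_field_derivative_transform_within_open)
      show "((\<lambda>_. 0) has_real_derivative gA k m c w (x + s *\<^sub>R m)) (at s)"
        using N1 by (simp add: gA_def N_def z_def)
      show "open {t. 1 < norm (x + t *\<^sub>R m)}"
        by (intro open_Collect_less continuous_intros)
      show "s \<in> {t. 1 < norm (x + t *\<^sub>R m)}" using N1 by (simp add: N_def z_def)
      fix t assume "t \<in> {t. 1 < norm (x + t *\<^sub>R m)}"
      then have "1 - (norm (x + t *\<^sub>R m))^2 < 0" by (simp add: power_less_one_iff abs_less_iff)
      then show "0 = PhiA k m c w (x + t *\<^sub>R m)"
        by (simp add: PhiA_def max_def)
    qed
  qed
qed



lemma lineB: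
  fixes x m w :: "'a::euclidean_space"
  assumes m: "norm m = 1" and wm: "w \<bullet> m = 0" and k: "0 \<le> k"
    and x: "x + s *\<^sub>R w \<notin> range (\<lambda>t. t *\<^sub>R m)" and s1: "norm (x + s *\<^sub>R w) \<noteq> 1"
  shows "((\<lambda>t. PhiB k m (x + t *\<^sub>R w)) has_real_derivative gB k m w (x + s *\<^sub>R w)) (at s)"
proof -
  define z where "z = x + s *\<^sub>R w"
  have G0: "GG m z > 0" and z0: "z \<noteq> 0" using Gpos[OF m x] by (auto simp: z_def)
  define N where "N = norm z"
  have N0: "N > 0" using z0 by (simp add: N_def)
  define b where "b = w \<bullet> z"
  define G where "G = GG m z"
  have dN: "((\<lambda>t. norm (x + t *\<^sub>R w)) has_real_derivative b / N) (at s)"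
    using norm_line_deriv[of x s w] z0 by (simp add: z_def b_def N_def inner_commute)
  have dG: "((\<lambda>t. GG m (x + t *\<^sub>R w)) has_real_derivative b / N) (at s)"
  proof -
    have "((\<lambda>t. norm (x + t *\<^sub>R w) + m \<bullet> (x + t *\<^sub>R w)) has_real_derivative b / N + m \<bullet> w) (at s)"
      by (rule DERIV_add[OF dN inner_line_deriv])
    then show ?thesis using wm by (simp add: GG_def[abs_def] inner_commute)
  qed
  have dP: "((\<lambda>t. Pk k (GG m (x + t *\<^sub>R w))) has_real_derivative Pk k G * (k * (b / N) / G)) (at s)"
    using Pk_deriv[OF k dG] G0 by (simp add: z_def G_def)
  show ?thesis
  proof (cases "N < 1")
    case True
    define F where "F t = Pk k (GG m (x + t *\<^sub>R w)) * GG m (x + t *\<^sub>R w) * (1 - (norm (x + t *\<^sub>R w))^2)" for t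
    have dF: "(F has_real_derivative gB k m w z) (at s)"
    proof -
      have "(F has_real_derivative
         (Pk k G * (k * (b / N) / G) * G + b / N * Pk k G) * (1 - N^2) + (- (2 * N * (b / N))) * (Pk k G * G)) (at s)"
        unfolding F_def
        by (rule derivative_eq_intros dP dN dG refl | simp add: z_def N_def G_def)+
      moreover have "(Pk k G * (k * (b / N) / G) * G + b / N * Pk k G) * (1 - N^2) + (- (2 * N * (b / N))) * (Pk k G * G)
          = gB k m w z"
        using N0 True G0 by (simp add: gB_def N_def[symmetric] b_def[symmetric] G_def[symmetric] field_simps)
      ultimately show ?thesis by simp
    qed
    show ?thesis
    proof (rule has_field_derivative_transform_within_open)
      show "(F has_real_derivative gB k m w (x + s *\<^sub>R w)) (at s)" using dF by (simp add: z_def)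
      show "open {t. norm (x + t *\<^sub>R w) < 1}"
        by (intro open_Collect_less continuous_intros)
      show "s \<in> {t. norm (x + t *\<^sub>R w) < 1}" using True by (simp add: N_def z_def)
      fix t assume "t \<in> {t. norm (x + t *\<^sub>R w) < 1}"
      then have "(norm (x + t *\<^sub>R w))^2 \<le> 1" by (intro power_le_one) auto
      then show "F t = PhiB k m (x + t *\<^sub>R w)"
        by (simp add: F_def PhiB_def max_def)
    qed
  next
    case False
    then have N1: "N > 1" using s1 by (simp add: N_def z_def)
    show ?thesis
    proof (rule has_field_derivative_transform_within_open)
      show "((\<lambda>_. 0) has_real_derivative gB k m w (x + s *\<^sub>R w)) (at s)"
        using N1 by (simp add: gB_def N_def z_def)
      show "open {t. 1 < norm (x + t *\<^sub>R w)}"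
        by (intro open_Collect_less continuous_intros)
      show "s \<in> {t. 1 < norm (x + t *\<^sub>R w)}" using N1 by (simp add: N_def z_def)
      fix t assume "t \<in> {t. 1 < norm (x + t *\<^sub>R w)}"
      then have "1 - (norm (x + t *\<^sub>R w))^2 < 0" by (simp add: power_less_one_iff abs_less_iff)
      then show "0 = PhiB k m (x + t *\<^sub>R w)"
        by (simp add: PhiB_def max_def)
    qed
  qed
qed



lemma basic_bounds:
  fixes m z w :: "'a::euclidean_space"
  assumes m: "norm m = 1" and k: "0 \<le> k" and z: "norm z \<le> 1"
  shows "0 \<le> Pk k (GG m z)" "Pk k (GG m z) \<le> 2 powr k"
    "\<bar>m \<bullet> z\<bar> \<le> 1" "\<bar>(m \<bullet> z) / norm z\<bar> \<le> 1" "\<bar>w \<bullet> z\<bar> \<le> norm w" "\<bar>(w \<bullet> z) / norm z\<bar> \<le> norm w"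
    "0 \<le> GG m z" "GG m z \<le> 2" "\<bar>1 - (norm z)^2\<bar> \<le> 1" "\<bar>max 0 (1 - (norm z)^2)\<bar> \<le> 1"
proof -
  have cm: "\<bar>m \<bullet> z\<bar> \<le> norm z" using Cauchy_Schwarz_ineq2[of m z] m by simp
  have cw: "\<bar>w \<bullet> z\<bar> \<le> norm w * norm z" using Cauchy_Schwarz_ineq2[of w z] by simp
  show "0 \<le> GG m z" by (rule GG_nonneg[OF m])
  show "GG m z \<le> 2" using GG_le[OF m, of z] z by linarith
  show "0 \<le> Pk k (GG m z)" by (rule Pk_nonneg)
  show "Pk k (GG m z) \<le> 2 powr k" by (rule Pk_le) (use GG_nonneg[OF m, of z] GG_le[OF m, of z] z k in auto)
  show "\<bar>m \<bullet> z\<bar> \<le> 1" using cm z by linarith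
  show "\<bar>(m \<bullet> z) / norm z\<bar> \<le> 1"
    using cm by (cases "z = 0") (auto simp: abs_div divide_le_eq_1)
  show "\<bar>w \<bullet> z\<bar> \<le> norm w" using cw z by (smt (verit, best) mult_left_le norm_ge_zero)
  show "\<bar>(w \<bullet> z) / norm z\<bar> \<le> norm w"
    using cw by (cases "z = 0") (auto simp: abs_div divide_le_eq)
  have n2: "(norm z)^2 \<le> 1" using z by (intro power_le_one) auto
  show "\<bar>1 - (norm z)^2\<bar> \<le> 1" using n2 by simp
  show "\<bar>max 0 (1 - (norm z)^2)\<bar> \<le> 1" using n2 by simp
qed

lemma gA_int0:
  fixes m w :: "'a::euclidean_space"
  assumes d: "DIM('a) \<ge> 2" and m: "norm m = 1" and wm: "w \<bullet> m = 0" and k: "0 \<le> k"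
  shows "(\<integral>z. gA k m c w z \<partial>lborel) = 0"
proof (rule ibp[where \<Phi>="PhiA k m c w" and v=m and K="2 powr k * (k + 3) * (\<bar>c\<bar> + norm w)"])
  show "PhiA k m c w \<in> borel_measurable borel" unfolding PhiA_def by measurable
  show "gA k m c w \<in> borel_measurable borel" unfolding gA_def by measurable
  have L: "\<bar>c + w \<bullet> z\<bar> \<le> \<bar>c\<bar> + norm w" if "norm z \<le> 1" for z :: 'a
    using basic_bounds(5)[OF m k that, where w=w] by linarith
  have K0: "0 \<le> 2 powr k * (k + 3) * (\<bar>c\<bar> + norm w)" using k by simp
  show "\<bar>PhiA k m c w z\<bar> \<le> 2 powr k * (k + 3) * (\<bar>c\<bar> + norm w)" for z
  proof (cases "norm z \<le> 1")
    case True
    note bb = basic_bounds[OF m k True]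
    have "\<bar>PhiA k m c w z\<bar> = Pk k (GG m z) * norm z * \<bar>max 0 (1 - (norm z)^2)\<bar> * \<bar>c + w \<bullet> z\<bar>"
      using bb(1) by (simp add: PhiA_def abs_mult)
    also have "\<dots> \<le> 2 powr k * 1 * 1 * (\<bar>c\<bar> + norm w)"
      using bb True L[OF True] by (intro mult_mono) auto
    also have "\<dots> \<le> 2 powr k * (k + 3) * (\<bar>c\<bar> + norm w)"
      using k by (intro mult_mono) auto
    finally show ?thesis .
  next
    case False
    then have "1 - (norm z)^2 < 0" by (simp add: power_less_one_iff abs_less_iff)
    then show ?thesis using K0 by (simp add: PhiA_def max_def)
  qed
  show "\<bar>gA k m c w z\<bar> \<le> 2 powr k * (k + 3) * (\<bar>c\<bar> + norm w)" for z
  proof (cases "norm z \<le> 1")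
    case True
    note bb = basic_bounds[OF m k True]
    have E: "\<bar>(k + (m \<bullet> z) / norm z) * (1 - (norm z)^2) - 2 * (m \<bullet> z) * norm z\<bar> \<le> k + 3"
    proof -
      have ka: "\<bar>k + (m \<bullet> z) / norm z\<bar> \<le> k + 1"
        using abs_triangle_ineq[of k "(m \<bullet> z) / norm z"] bb(4) k by simp
      have h1: "\<bar>(k + (m \<bullet> z) / norm z) * (1 - (norm z)^2)\<bar> \<le> (k + 1) * 1"
        unfolding abs_mult using bb k ka by (intro mult_mono) auto
      have h2: "\<bar>2 * (m \<bullet> z) * norm z\<bar> \<le> 2 * 1 * 1"
        unfolding abs_mult using bb True by (intro mult_mono) auto
      have "\<bar>(k + (m \<bullet> z) / norm z) * (1 - (norm z)^2) - 2 * (m \<bullet> z) * norm z\<bar>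
          \<le> \<bar>(k + (m \<bullet> z) / norm z) * (1 - (norm z)^2)\<bar> + \<bar>2 * (m \<bullet> z) * norm z\<bar>"
        by (rule abs_triangle_ineq4)
      also have "\<dots> \<le> (k + 1) * 1 + 2 * 1 * 1" by (rule add_mono[OF h1 h2])
      finally show ?thesis by simp
    qed
    have "\<bar>gA k m c w z\<bar> = Pk k (GG m z) * \<bar>(k + (m \<bullet> z) / norm z) * (1 - (norm z)^2) - 2 * (m \<bullet> z) * norm z\<bar> * \<bar>c + w \<bullet> z\<bar>"
      using bb(1) True by (simp add: gA_def abs_mult)
    also have "\<dots> \<le> 2 powr k * (k + 3) * (\<bar>c\<bar> + norm w)"
      using bb E L[OF True] by (intro mult_mono) auto
    finally show ?thesis .
  next
    case False
    then show ?thesis using K0 by (simp add: gA_def)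
  qed
  show "PhiA k m c w z = 0" if "norm z > 1" for z
  proof -
    have "1 - (norm z)^2 < 0" using that by (simp add: power_less_one_iff abs_less_iff)
    then show ?thesis by (simp add: PhiA_def max_def)
  qed
  show "gA k m c w z = 0" if "norm z > 1" for z using that by (simp add: gA_def)
  have cont: "continuous_on UNIV (PhiA k m c w)"
    unfolding PhiA_def by (intro continuous_intros Pk_cont[OF m k, THEN continuous_on_subset]) auto
  show "AE x in lborel. continuous_on {0..1} (\<lambda>s. PhiA k m c w (x + s *\<^sub>R m)) \<and>
        (\<exists>S. finite S \<and> (\<forall>s\<in>{0<..<1}-S. ((\<lambda>s. PhiA k m c w (x + s *\<^sub>R m)) has_real_derivative gA k m c w (x + s *\<^sub>R m)) (at s)))"
  proof (rule AE_I'[OF span_null[OF d, of m]], rule subsetI)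
    fix x assume x: "x \<in> {x \<in> space lborel. \<not> (continuous_on {0..1} (\<lambda>s. PhiA k m c w (x + s *\<^sub>R m)) \<and>
        (\<exists>S. finite S \<and> (\<forall>s\<in>{0<..<1}-S. ((\<lambda>s. PhiA k m c w (x + s *\<^sub>R m)) has_real_derivative gA k m c w (x + s *\<^sub>R m)) (at s))))}"
    show "x \<in> range (\<lambda>t. t *\<^sub>R m)"
    proof (rule ccontr)
      assume nx: "x \<notin> range (\<lambda>t. t *\<^sub>R m)"
      have xs: "x + s *\<^sub>R m \<notin> range (\<lambda>t. t *\<^sub>R m)" for s
      proof
        assume "x + s *\<^sub>R m \<in> range (\<lambda>t. t *\<^sub>R m)"
        then obtain t where "x + s *\<^sub>R m = t *\<^sub>R m" by auto
        then have "x = (t - s) *\<^sub>R m" by (simp add: scaleR_diff_left algebra_simps)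
        then show False using nx by auto
      qed
      have c1: "continuous_on {0..1} (\<lambda>s. PhiA k m c w (x + s *\<^sub>R m))"
        by (intro continuous_on_compose2[OF cont] continuous_intros) auto
      have m0: "m \<noteq> 0" using m by auto
      have "finite {s. norm (x + s *\<^sub>R m) = 1}" by (rule sphere_line_finite[OF m0])
      moreover have "\<forall>s\<in>{0<..<1}-{s. norm (x + s *\<^sub>R m) = 1}. ((\<lambda>s. PhiA k m c w (x + s *\<^sub>R m)) has_real_derivative gA k m c w (x + s *\<^sub>R m)) (at s)"
        using lineA[OF m wm k xs] by blast
      ultimately show False using x c1 by blast
    qed
  qed
qed

lemma gB_int0:
  fixes m w :: "'a::euclidean_space"
  assumes m: "norm m = 1" and wm: "w \<bullet> m = 0" and k: "0 \<le> k" and w0: "w \<noteq> 0"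
  shows "(\<integral>z. gB k m w z \<partial>lborel) = 0"
proof (rule ibp[where \<Phi>="PhiB k m" and v=w and K="2 powr k * (k + 5) * (norm w + 1)"])
  show "PhiB k m \<in> borel_measurable borel" unfolding PhiB_def by measurable
  show "gB k m w \<in> borel_measurable borel" unfolding gB_def by measurable
  have K0: "0 \<le> 2 powr k * (k + 5) * (norm w + 1)" using k by simp
  show "\<bar>PhiB k m z\<bar> \<le> 2 powr k * (k + 5) * (norm w + 1)" for z
  proof (cases "norm z \<le> 1")
    case True
    note bb = basic_bounds[OF m k True]
    have "\<bar>PhiB k m z\<bar> = Pk k (GG m z) * GG m z * \<bar>max 0 (1 - (norm z)^2)\<bar>"
      using bb by (simp add: PhiB_def abs_mult)
    also have "\<dots> \<le> 2 powr k * 2 * 1"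
      using bb by (intro mult_mono) auto
    also have "\<dots> \<le> 2 powr k * (k + 5) * (norm w + 1)"
      using k by (intro mult_mono) auto
    finally show ?thesis .
  next
    case False
    then have "1 - (norm z)^2 < 0" by (simp add: power_less_one_iff abs_less_iff)
    then show ?thesis using K0 by (simp add: PhiB_def max_def)
  qed
  show "\<bar>gB k m w z\<bar> \<le> 2 powr k * (k + 5) * (norm w + 1)" for z
  proof (cases "norm z \<le> 1")
    case True
    note bb = basic_bounds[OF m k True]
    have E: "\<bar>(k + 1) * (w \<bullet> z / norm z) * (1 - (norm z)^2) - 2 * GG m z * (w \<bullet> z)\<bar> \<le> (k + 5) * (norm w + 1)"
    proof -
      have h1: "\<bar>(k + 1) * (w \<bullet> z / norm z) * (1 - (norm z)^2)\<bar> \<le> (k + 1) * norm w * 1"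
        unfolding abs_mult using bb k by (intro mult_mono) auto
      have h2: "\<bar>2 * GG m z * (w \<bullet> z)\<bar> \<le> 2 * 2 * norm w"
        unfolding abs_mult using bb by (intro mult_mono) auto
      have "\<bar>(k + 1) * (w \<bullet> z / norm z) * (1 - (norm z)^2) - 2 * GG m z * (w \<bullet> z)\<bar>
          \<le> \<bar>(k + 1) * (w \<bullet> z / norm z) * (1 - (norm z)^2)\<bar> + \<bar>2 * GG m z * (w \<bullet> z)\<bar>"
        by (rule abs_triangle_ineq4)
      also have "\<dots> \<le> (k + 1) * norm w * 1 + 2 * 2 * norm w" by (rule add_mono[OF h1 h2])
      also have "\<dots> \<le> (k + 5) * (norm w + 1)"
        using k by (simp add: algebra_simps)
      finally show ?thesis .
    qed
    have "\<bar>gB k m w z\<bar> = Pk k (GG m z) * \<bar>(k + 1) * (w \<bullet> z / norm z) * (1 - (norm z)^2) - 2 * GG m z * (w \<bullet> z)\<bar>"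
      using bb(1) True by (simp add: gB_def abs_mult)
    also have "\<dots> \<le> 2 powr k * ((k + 5) * (norm w + 1))"
      using bb E by (intro mult_mono) auto
    finally show ?thesis by (simp add: mult.assoc)
  next
    case False
    then show ?thesis using K0 by (simp add: gB_def)
  qed
  show "PhiB k m z = 0" if "norm z > 1" for z
  proof -
    have "1 - (norm z)^2 < 0" using that by (simp add: power_less_one_iff abs_less_iff)
    then show ?thesis by (simp add: PhiB_def max_def)
  qed
  show "gB k m w z = 0" if "norm z > 1" for z using that by (simp add: gB_def)
  have cont: "continuous_on UNIV (PhiB k m)"
    unfolding PhiB_def GG_def by (intro continuous_intros Pk_cont[OF m k, unfolded GG_def, THEN continuous_on_subset]) auto
  show "AE x in lborel. continuous_on {0..1} (\<lambda>s. PhiB k m (x + s *\<^sub>R w)) \<and>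
        (\<exists>S. finite S \<and> (\<forall>s\<in>{0<..<1}-S. ((\<lambda>s. PhiB k m (x + s *\<^sub>R w)) has_real_derivative gB k m w (x + s *\<^sub>R w)) (at s)))"
  proof (rule AE_I2, intro conjI)
    fix x :: 'a
    show "continuous_on {0..1} (\<lambda>s. PhiB k m (x + s *\<^sub>R w))"
      by (intro continuous_on_compose2[OF cont] continuous_intros) auto
    let ?S = "{s. norm (x + s *\<^sub>R w) = 1} \<union> {s. x + s *\<^sub>R w \<in> range (\<lambda>t. t *\<^sub>R m)}"
    have "finite ?S" using sphere_line_finite[OF w0] span_line_finite[OF w0 wm] by blast
    moreover have "\<forall>s\<in>{0<..<1}-?S. ((\<lambda>s. PhiB k m (x + s *\<^sub>R w)) has_real_derivative gB k m w (x + s *\<^sub>R w)) (at s)"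
      using lineB[OF m wm k] by blast
    ultimately show "\<exists>S. finite S \<and> (\<forall>s\<in>{0<..<1}-S. ((\<lambda>s. PhiB k m (x + s *\<^sub>R w)) has_real_derivative gB k m w (x + s *\<^sub>R w)) (at s))"
      by blast
  qed
qed



definition h1 :: "real \<Rightarrow> real \<Rightarrow> real" where "h1 p r = r powr p * (1 - r^2)"
definition h2 :: "real \<Rightarrow> real \<Rightarrow> real" where "h2 p r = 2 * (r powr p * r^2)"

lemma h_meas[measurable]: "h1 p \<in> borel_measurable borel" "h2 p \<in> borel_measurable borel"
  unfolding h1_def h2_def by measurable

lemma h_bounds:
  assumes "0 < r" "r \<le> 1" "0 \<le> p"
  shows "0 \<le> h1 p r \<and> h1 p r \<le> 1" "0 \<le> h2 p r \<and> h2 p r \<le> 2"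
proof -
  have a: "r powr p \<le> 1" using powr_mono2[of p r 1] assms by simp
  have b: "r^2 \<le> 1" using assms by (simp add: power_le_one)
  have c: "0 \<le> r powr p" by simp
  show "0 \<le> h1 p r \<and> h1 p r \<le> 1" unfolding h1_def using a b c
    by (auto intro!: mult_nonneg_nonneg mult_le_one)
  show "0 \<le> h2 p r \<and> h2 p r \<le> 2" unfolding h2_def using a b c
    by (auto intro!: mult_nonneg_nonneg mult_le_one)
qed

lemma powr_sq: "(r::real) > 0 \<Longrightarrow> r powr p * r^2 = r powr (p + 2)"
  by (simp add: powr_add powr_numeral)

lemma R1:
  assumes p: "0 \<le> p" and n: "n \<ge> 1"
  shows "(\<integral>r. indicator {0<..1} r * r^(n-1) * h1 p r \<partial>lborel) = 1 / (p + n) - 1 / (p + 2 + n)"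
proof -
  have i: "integrable lborel (\<lambda>r::real. indicator {0<..1} r * r^(n-1) * r powr q)" if q0: "q \<ge> 0" for q :: real
  proof -
    have "r^(n-1) * r powr q \<le> 1" if "0 < r" "r \<le> 1" for r :: real
      using that q0 powr_mono2[of q r 1] by (intro mult_le_one) (auto simp: power_le_one)
    then have "\<bar>indicator {0<..1} r * r^(n-1) * r powr q\<bar> \<le> 1 * indicator {0<..1} r" for r :: real
      by (auto split: split_indicator)
    then show ?thesis by (intro int01[where K=1]) auto
  qed
  have "(\<integral>r. indicator {0<..1} r * r^(n-1) * h1 p r \<partial>lborel)
      = (\<integral>r. indicator {0<..1} r * r^(n-1) * r powr p - indicator {0<..1} r * r^(n-1) * r powr (p + 2) \<partial>lborel)"
    by (intro Bochner_Integration.integral_cong refl)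
       (auto simp: h1_def powr_sq[symmetric] algebra_simps split: split_indicator)
  also have "\<dots> = 1 / (p + n) - 1 / (p + 2 + n)"
    using p n Bochner_Integration.integral_diff[OF i[OF p] i[of "p+2"]] powint[of p n] powint[of "p+2" n] by simp
  finally show ?thesis .
qed

lemma R2:
  assumes p: "0 \<le> p" and n: "n \<ge> 1"
  shows "(\<integral>r. indicator {0<..1} r * r^(n-1) * h2 p r \<partial>lborel) = 2 / (p + 2 + n)"
proof -
  have "(\<integral>r. indicator {0<..1} r * r^(n-1) * h2 p r \<partial>lborel)
      = (\<integral>r. 2 * (indicator {0<..1} r * r^(n-1) * r powr (p + 2)) \<partial>lborel)"
    by (intro Bochner_Integration.integral_cong refl)
       (auto simp: h2_def powr_sq[symmetric] algebra_simps split: split_indicator)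
  also have "\<dots> = 2 / (p + 2 + n)"
    using powint[of "p+2" n] p n by simp
  finally show ?thesis .
qed

lemma RI:
  fixes b :: "'a::euclidean_space \<Rightarrow> real"
  assumes [measurable]: "b \<in> borel_measurable borel" and bb: "\<And>w. norm w = 1 \<Longrightarrow> \<bar>b w\<bar> \<le> Kb" and p: "0 \<le> p"
  shows "(\<integral>z. indicator DD z * h1 p (norm z) * b (nrm z) \<partial>lborel) = (1 / (p + DIM('a)) - 1 / (p + 2 + DIM('a))) * (\<integral>x. b x \<partial>sphere_surface)"
    "(\<integral>z. indicator DD z * h2 p (norm z) * b (nrm z) \<partial>lborel) = (2 / (p + 2 + DIM('a))) * (\<integral>x. b x \<partial>sphere_surface)"
proof -
  have n: "DIM('a) \<ge> 1" by (simp add: DIM_positive Suc_leI)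
  show "(\<integral>z. indicator DD z * h1 p (norm z) * b (nrm z) \<partial>lborel) = (1 / (p + DIM('a)) - 1 / (p + 2 + DIM('a))) * (\<integral>x. b x \<partial>sphere_surface)"
    by (subst radial_real[where Kb=Kb and Kh=1]) (use bb h_bounds p R1[OF p n] in auto)
  show "(\<integral>z. indicator DD z * h2 p (norm z) * b (nrm z) \<partial>lborel) = (2 / (p + 2 + DIM('a))) * (\<integral>x. b x \<partial>sphere_surface)"
    by (subst radial_real[where Kb=Kb and Kh=2]) (use bb h_bounds p R2[OF p n] in auto)
qed

lemma RI_int:
  fixes b :: "'a::euclidean_space \<Rightarrow> real"
  assumes [measurable]: "b \<in> borel_measurable borel" and bb: "\<And>w. norm w = 1 \<Longrightarrow> \<bar>b w\<bar> \<le> Kb" and p: "0 \<le> p"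
  shows "integrable lborel (\<lambda>z. indicator DD z * h1 p (norm z) * b (nrm z))"
    "integrable lborel (\<lambda>z. indicator DD z * h2 p (norm z) * b (nrm z))"
proof -
  have hD: "0 < norm z \<and> norm z \<le> 1" if "z \<in> DD" for z :: 'a using that by (auto simp: DD_def)
  show "integrable lborel (\<lambda>z. indicator DD z * h1 p (norm z) * b (nrm z))"
  proof (rule intDD[where K="1 * Kb"])
    fix z :: 'a
    show "\<bar>indicator DD z * h1 p (norm z) * b (nrm z)\<bar> \<le> 1 * Kb * indicator DD z"
    proof (cases "z \<in> DD")
      case True
      have "h1 p (norm z) * \<bar>b (nrm z)\<bar> \<le> 1 * Kb"
        using h_bounds(1)[of "norm z" p] hD[OF True] p bb[of "nrm z"] by (intro mult_mono) auto
      then show ?thesis using True h_bounds(1)[of "norm z" p] hD[OF True] p by (simp add: abs_mult)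
    qed simp
  qed measurable
  show "integrable lborel (\<lambda>z. indicator DD z * h2 p (norm z) * b (nrm z))"
  proof (rule intDD[where K="2 * Kb"])
    fix z :: 'a
    show "\<bar>indicator DD z * h2 p (norm z) * b (nrm z)\<bar> \<le> 2 * Kb * indicator DD z"
    proof (cases "z \<in> DD")
      case True
      have "h2 p (norm z) * \<bar>b (nrm z)\<bar> \<le> 2 * Kb"
        using h_bounds(2)[of "norm z" p] hD[OF True] p bb[of "nrm z"] by (intro mult_mono) auto
      then show ?thesis using True h_bounds(2)[of "norm z" p] hD[OF True] p by (simp add: abs_mult)
    qed simp
  qed measurable
qed



definition b0 :: "real \<Rightarrow> 'a::euclidean_space \<Rightarrow> 'a \<Rightarrow> real" where
  "b0 k m x = Pk k (1 + m \<bullet> x)"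

lemma b0_meas[measurable]: "b0 k m \<in> borel_measurable borel"
  unfolding b0_def by measurable

lemma b0_bounds:
  assumes m: "norm m = 1" and k: "0 \<le> k" and x: "norm x = 1"
  shows "0 \<le> b0 k m x" "b0 k m x \<le> 2 powr k" "\<bar>m \<bullet> x\<bar> \<le> 1" "\<bar>w \<bullet> x\<bar> \<le> norm w"
proof -
  have c: "\<bar>m \<bullet> x\<bar> \<le> 1" using Cauchy_Schwarz_ineq2[of m x] m x by simp
  show "\<bar>m \<bullet> x\<bar> \<le> 1" by (rule c)
  show "0 \<le> b0 k m x" by (simp add: b0_def Pk_nonneg)
  show "b0 k m x \<le> 2 powr k" unfolding b0_def by (rule Pk_le) (use c k in auto)
  show "\<bar>w \<bullet> x\<bar> \<le> norm w" using Cauchy_Schwarz_ineq2[of w x] x by simp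
qed

lemma int_restrict_DD:
  fixes g :: "'a::euclidean_space \<Rightarrow> real"
  assumes "\<And>z. norm z > 1 \<Longrightarrow> g z = 0" and [measurable]: "g \<in> borel_measurable borel"
  shows "(\<integral>z. g z \<partial>lborel) = (\<integral>z. indicator DD z * g z \<partial>lborel)"
proof (rule integral_cong_AE)
  show "AE z in lborel. g z = indicator DD z * g z"
    using AE_lborel_singleton[of "0::'a"]
    by eventually_elim (use assms in \<open>auto simp: DD_def split: split_indicator\<close>)
qed (use assms in auto)

lemma z_decomp:
  assumes "z \<noteq> 0"
  shows "z = norm z *\<^sub>R nrm z"
  using assms by (simp add: nrm_eq)

lemma decA:
  fixes m z :: "'a::euclidean_space"
  assumes m: "norm m = 1" and k: "0 \<le> k" and z: "z \<in> DD"
  shows "gA k m 1 0 z = h1 k (norm z) * (k * b0 k m (nrm z)) + h1 k (norm z) * (b0 k m (nrm z) * (m \<bullet> nrm z))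
           - h2 k (norm z) * (b0 k m (nrm z) * (m \<bullet> nrm z))"
proof -
  have z0: "z \<noteq> 0" and z1: "norm z \<le> 1" using z by (auto simp: DD_def)
  have P: "Pk k (GG m z) = norm z powr k * b0 k m (nrm z)" using decomp_Pk[OF m z0 k] by (simp add: b0_def)
  have mz: "m \<bullet> z = norm z * (m \<bullet> nrm z)" by (subst z_decomp[OF z0]) simp
  have mzn: "(m \<bullet> z) / norm z = m \<bullet> nrm z" using z0 by (simp add: mz)
  show ?thesis using z1 unfolding gA_def h1_def h2_def
    by (simp add: P mzn) (simp add: mz power2_eq_square algebra_simps)
qed

lemma decC:
  fixes m z w :: "'a::euclidean_space"
  assumes m: "norm m = 1" and k: "0 \<le> k" and z: "z \<in> DD"
  shows "gA k m 0 w z = h1 (k+1) (norm z) * (k * b0 k m (nrm z) * (w \<bullet> nrm z)) + h1 (k+1) (norm z) * (b0 k m (nrm z) * (m \<bullet> nrm z) * (w \<bullet> nrm z))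
           - h2 (k+1) (norm z) * (b0 k m (nrm z) * (m \<bullet> nrm z) * (w \<bullet> nrm z))"
proof -
  have z0: "z \<noteq> 0" and z1: "norm z \<le> 1" using z by (auto simp: DD_def)
  have P: "Pk k (GG m z) = norm z powr k * b0 k m (nrm z)" using decomp_Pk[OF m z0 k] by (simp add: b0_def)
  have mz: "m \<bullet> z = norm z * (m \<bullet> nrm z)" by (subst z_decomp[OF z0]) simp
  have wz: "w \<bullet> z = norm z * (w \<bullet> nrm z)" by (subst z_decomp[OF z0]) simp
  have mzn: "(m \<bullet> z) / norm z = m \<bullet> nrm z" using z0 by (simp add: mz)
  have pw: "norm z powr (k + 1) = norm z powr k * norm z" using z0 by (simp add: powr_add)
  show ?thesis using z1 unfolding gA_def h1_def h2_def
    by (simp add: P mzn pw) (simp add: mz wz power2_eq_square algebra_simps)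
qed

lemma decB:
  fixes m z w :: "'a::euclidean_space"
  assumes m: "norm m = 1" and k: "0 \<le> k" and z: "z \<in> DD"
  shows "gB k m w z = h1 k (norm z) * ((k + 1) * b0 k m (nrm z) * (w \<bullet> nrm z)) - h2 k (norm z) * (b0 k m (nrm z) * (w \<bullet> nrm z))
           - h2 k (norm z) * (b0 k m (nrm z) * (m \<bullet> nrm z) * (w \<bullet> nrm z))"
proof -
  have z0: "z \<noteq> 0" and z1: "norm z \<le> 1" using z by (auto simp: DD_def)
  have P: "Pk k (GG m z) = norm z powr k * b0 k m (nrm z)" using decomp_Pk[OF m z0 k] by (simp add: b0_def)
  have mz: "m \<bullet> z = norm z * (m \<bullet> nrm z)" by (subst z_decomp[OF z0]) simp
  have wz: "w \<bullet> z = norm z * (w \<bullet> nrm z)" by (subst z_decomp[OF z0]) simp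
  have wzn: "(w \<bullet> z) / norm z = w \<bullet> nrm z" using z0 by (simp add: wz)
  have G: "GG m z = norm z * (1 + m \<bullet> nrm z)" by (simp add: GG_def mz algebra_simps)
  show ?thesis using z1 unfolding gB_def h1_def h2_def P
    by (simp add: wzn G) (simp add: wz power2_eq_square algebra_simps)
qed



lemma comb:
  fixes b1 b2 b3 b4 :: "'a::euclidean_space \<Rightarrow> real"
  assumes [measurable]: "b1 \<in> borel_measurable borel" "b2 \<in> borel_measurable borel"
      "b3 \<in> borel_measurable borel" "b4 \<in> borel_measurable borel"
    and bb: "\<And>x. norm x = 1 \<Longrightarrow> \<bar>b1 x\<bar> \<le> K \<and> \<bar>b2 x\<bar> \<le> K \<and> \<bar>b3 x\<bar> \<le> K \<and> \<bar>b4 x\<bar> \<le> K"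
    and p: "0 \<le> p"
  shows "(\<integral>z. indicator DD z * (h1 p (norm z) * b1 (nrm z) + h1 p (norm z) * b2 (nrm z)
            - h2 p (norm z) * b3 (nrm z) - h2 p (norm z) * b4 (nrm z)) \<partial>lborel)
       = (1 / (p + DIM('a)) - 1 / (p + 2 + DIM('a))) * ((\<integral>x. b1 x \<partial>sphere_surface) + (\<integral>x. b2 x \<partial>sphere_surface))
         - (2 / (p + 2 + DIM('a))) * ((\<integral>x. b3 x \<partial>sphere_surface) + (\<integral>x. b4 x \<partial>sphere_surface))"
proof -
  have b: "\<And>x. norm x = 1 \<Longrightarrow> \<bar>b1 x\<bar> \<le> K" "\<And>x. norm x = 1 \<Longrightarrow> \<bar>b2 x\<bar> \<le> K"
    "\<And>x. norm x = 1 \<Longrightarrow> \<bar>b3 x\<bar> \<le> K" "\<And>x. norm x = 1 \<Longrightarrow> \<bar>b4 x\<bar> \<le> K" using bb by auto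
  note i1 = RI_int(1)[OF assms(1) b(1) p] and i2 = RI_int(1)[OF assms(2) b(2) p]
   and i3 = RI_int(2)[OF assms(3) b(3) p] and i4 = RI_int(2)[OF assms(4) b(4) p]
  have "(\<integral>z. indicator DD z * (h1 p (norm z) * b1 (nrm z) + h1 p (norm z) * b2 (nrm z)
            - h2 p (norm z) * b3 (nrm z) - h2 p (norm z) * b4 (nrm z)) \<partial>lborel)
      = (\<integral>z. indicator DD z * h1 p (norm z) * b1 (nrm z) + indicator DD z * h1 p (norm z) * b2 (nrm z)
            - indicator DD z * h2 p (norm z) * b3 (nrm z) - indicator DD z * h2 p (norm z) * b4 (nrm z) \<partial>lborel)"
    by (simp add: algebra_simps)
  also have "\<dots> = (\<integral>z. indicator DD z * h1 p (norm z) * b1 (nrm z) \<partial>lborel) + (\<integral>z. indicator DD z * h1 p (norm z) * b2 (nrm z) \<partial>lborel)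
      - (\<integral>z. indicator DD z * h2 p (norm z) * b3 (nrm z) \<partial>lborel) - (\<integral>z. indicator DD z * h2 p (norm z) * b4 (nrm z) \<partial>lborel)"
    using i1 i2 i3 i4 by (simp add: Bochner_Integration.integral_diff Bochner_Integration.integral_add)
  also have "\<dots> = (1 / (p + DIM('a)) - 1 / (p + 2 + DIM('a))) * ((\<integral>x. b1 x \<partial>sphere_surface) + (\<integral>x. b2 x \<partial>sphere_surface))
         - (2 / (p + 2 + DIM('a))) * ((\<integral>x. b3 x \<partial>sphere_surface) + (\<integral>x. b4 x \<partial>sphere_surface))"
  proof -
    have e1: "(\<integral>z. indicator DD z * h1 p (norm z) * b1 (nrm z) \<partial>lborel) = (1 / (p + DIM('a)) - 1 / (p + 2 + DIM('a))) * (\<integral>x. b1 x \<partial>sphere_surface)"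
      by (rule RI(1)[OF assms(1) b(1) p])
    have e2: "(\<integral>z. indicator DD z * h1 p (norm z) * b2 (nrm z) \<partial>lborel) = (1 / (p + DIM('a)) - 1 / (p + 2 + DIM('a))) * (\<integral>x. b2 x \<partial>sphere_surface)"
      by (rule RI(1)[OF assms(2) b(2) p])
    have e3: "(\<integral>z. indicator DD z * h2 p (norm z) * b3 (nrm z) \<partial>lborel) = (2 / (p + 2 + DIM('a))) * (\<integral>x. b3 x \<partial>sphere_surface)"
      by (rule RI(2)[OF assms(3) b(3) p])
    have e4: "(\<integral>z. indicator DD z * h2 p (norm z) * b4 (nrm z) \<partial>lborel) = (2 / (p + 2 + DIM('a))) * (\<integral>x. b4 x \<partial>sphere_surface)"
      by (rule RI(2)[OF assms(4) b(4) p])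
    show ?thesis unfolding e1 e2 e3 e4 by (simp only: distrib_left diff_diff_eq)
  qed
  finally show ?thesis .
qed

lemma gA_meas[measurable]: "gA k m c w \<in> borel_measurable borel" unfolding gA_def by measurable
lemma gB_meas[measurable]: "gB k m w \<in> borel_measurable borel" unfolding gB_def by measurable

lemma eqA:
  fixes m :: "'a::euclidean_space"
  assumes d: "DIM('a) \<ge> 2" and m: "norm m = 1" and k: "0 \<le> k"
  shows "(1 / (k + real DIM('a)) - 1 / (k + 2 + real DIM('a))) * ((\<integral>x. k * b0 k m x \<partial>sphere_surface) + (\<integral>x. b0 k m x * (m \<bullet> x) \<partial>sphere_surface))
         - (2 / (k + 2 + real DIM('a))) * ((\<integral>x. b0 k m x * (m \<bullet> x) \<partial>sphere_surface) + (\<integral>x. 0 \<partial>(sphere_surface::'a measure))) = 0"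
proof -
  have "(\<integral>z. gA k m 1 0 z \<partial>lborel) = 0" by (rule gA_int0[OF d m]) (use k in auto)
  then have "0 = (\<integral>z. gA k m 1 0 z \<partial>lborel)" by simp
  also have "\<dots> = (\<integral>z. indicator DD z * gA k m 1 0 z \<partial>lborel)"
    by (rule int_restrict_DD) (auto simp: gA_def)
  also have "\<dots> = (\<integral>z. indicator DD z * (h1 k (norm z) * (k * b0 k m (nrm z)) + h1 k (norm z) * (b0 k m (nrm z) * (m \<bullet> nrm z))
            - h2 k (norm z) * (b0 k m (nrm z) * (m \<bullet> nrm z)) - h2 k (norm z) * 0) \<partial>lborel)"
    by (intro Bochner_Integration.integral_cong refl) (auto simp: decA m k split: split_indicator)
  also have "\<dots> = (1 / (k + DIM('a)) - 1 / (k + 2 + DIM('a))) * ((\<integral>x. k * b0 k m x \<partial>sphere_surface) + (\<integral>x. b0 k m x * (m \<bullet> x) \<partial>sphere_surface))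
         - (2 / (k + 2 + DIM('a))) * ((\<integral>x. b0 k m x * (m \<bullet> x) \<partial>sphere_surface) + (\<integral>x. 0 \<partial>(sphere_surface::'a measure)))"
  proof (rule comb[where K="(k + 1) * 2 powr k", OF _ _ _ _ _ k])
    fix x :: 'a assume x: "norm x = 1"
    note bb = b0_bounds[OF m k x]
    have "\<bar>k * b0 k m x\<bar> \<le> (k + 1) * 2 powr k" using bb k by (simp add: abs_mult) (intro mult_mono, auto)
    moreover have "\<bar>b0 k m x * (m \<bullet> x)\<bar> \<le> (k + 1) * 2 powr k"
    proof -
      have "\<bar>b0 k m x * (m \<bullet> x)\<bar> \<le> 2 powr k * 1" unfolding abs_mult using bb by (intro mult_mono) auto
      also have "\<dots> \<le> (k + 1) * 2 powr k" using k by simp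
      finally show ?thesis .
    qed
    moreover have "0 \<le> (k + 1) * 2 powr k" using k by simp
    ultimately show "\<bar>k * b0 k m x\<bar> \<le> (k + 1) * 2 powr k \<and> \<bar>b0 k m x * (m \<bullet> x)\<bar> \<le> (k + 1) * 2 powr k \<and>
         \<bar>b0 k m x * (m \<bullet> x)\<bar> \<le> (k + 1) * 2 powr k \<and> \<bar>0::real\<bar> \<le> (k + 1) * 2 powr k" by simp
  qed measurable
  finally show ?thesis by simp
qed



lemma beta_bounds:
  fixes m w x :: "'a::euclidean_space"
  assumes m: "norm m = 1" and k: "0 \<le> k" and x: "norm x = 1" and c: "0 \<le> c" "c \<le> k + 1"
  shows "\<bar>c * b0 k m x * (w \<bullet> x)\<bar> \<le> (k + 1) * 2 powr k * (norm w + 1)"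
    "\<bar>b0 k m x * (m \<bullet> x) * (w \<bullet> x)\<bar> \<le> (k + 1) * 2 powr k * (norm w + 1)"
    "\<bar>b0 k m x * (w \<bullet> x)\<bar> \<le> (k + 1) * 2 powr k * (norm w + 1)"
proof -
  note bb = b0_bounds[OF m k x]
  have w1: "norm w \<le> norm w + 1" by simp
  have "\<bar>c * b0 k m x * (w \<bullet> x)\<bar> \<le> (k + 1) * 2 powr k * (norm w + 1)"
    unfolding abs_mult using bb c w1 by (intro mult_mono) (auto intro: order.trans[OF bb(4)])
  then show "\<bar>c * b0 k m x * (w \<bullet> x)\<bar> \<le> (k + 1) * 2 powr k * (norm w + 1)" .
  have "\<bar>b0 k m x * (m \<bullet> x) * (w \<bullet> x)\<bar> \<le> (2 powr k * 1) * (norm w + 1)"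
    unfolding abs_mult using bb by (intro mult_mono) (auto intro: order.trans[OF bb(4)])
  also have "\<dots> \<le> (k + 1) * 2 powr k * (norm w + 1)" using k by (intro mult_right_mono) auto
  finally show "\<bar>b0 k m x * (m \<bullet> x) * (w \<bullet> x)\<bar> \<le> (k + 1) * 2 powr k * (norm w + 1)" .
  have "\<bar>b0 k m x * (w \<bullet> x)\<bar> \<le> (2 powr k) * (norm w + 1)"
    unfolding abs_mult using bb by (intro mult_mono) (auto intro: order.trans[OF bb(4)])
  also have "\<dots> \<le> (k + 1) * 2 powr k * (norm w + 1)" using k by (intro mult_right_mono) auto
  finally show "\<bar>b0 k m x * (w \<bullet> x)\<bar> \<le> (k + 1) * 2 powr k * (norm w + 1)" .
qed

lemma eqC:
  fixes m w :: "'a::euclidean_space"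
  assumes d: "DIM('a) \<ge> 2" and m: "norm m = 1" and k: "0 \<le> k" and wm: "w \<bullet> m = 0"
  shows "(1 / ((k+1) + real DIM('a)) - 1 / ((k+1) + 2 + real DIM('a))) * ((\<integral>x. k * b0 k m x * (w \<bullet> x) \<partial>sphere_surface) + (\<integral>x. b0 k m x * (m \<bullet> x) * (w \<bullet> x) \<partial>sphere_surface))
         - (2 / ((k+1) + 2 + real DIM('a))) * ((\<integral>x. b0 k m x * (m \<bullet> x) * (w \<bullet> x) \<partial>sphere_surface) + (\<integral>x. 0 \<partial>(sphere_surface::'a measure))) = 0"
proof -
  have "(\<integral>z. gA k m 0 w z \<partial>lborel) = 0" by (rule gA_int0[OF d m wm k])
  then have "0 = (\<integral>z. gA k m 0 w z \<partial>lborel)" by simp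
  also have "\<dots> = (\<integral>z. indicator DD z * gA k m 0 w z \<partial>lborel)"
    by (rule int_restrict_DD) (auto simp: gA_def)
  also have "\<dots> = (\<integral>z. indicator DD z * (h1 (k+1) (norm z) * (k * b0 k m (nrm z) * (w \<bullet> nrm z)) + h1 (k+1) (norm z) * (b0 k m (nrm z) * (m \<bullet> nrm z) * (w \<bullet> nrm z))
            - h2 (k+1) (norm z) * (b0 k m (nrm z) * (m \<bullet> nrm z) * (w \<bullet> nrm z)) - h2 (k+1) (norm z) * 0) \<partial>lborel)"
    by (intro Bochner_Integration.integral_cong refl) (auto simp: decC m k split: split_indicator)
  also have "\<dots> = (1 / ((k+1) + real DIM('a)) - 1 / ((k+1) + 2 + real DIM('a))) * ((\<integral>x. k * b0 k m x * (w \<bullet> x) \<partial>sphere_surface) + (\<integral>x. b0 k m x * (m \<bullet> x) * (w \<bullet> x) \<partial>sphere_surface))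
         - (2 / ((k+1) + 2 + real DIM('a))) * ((\<integral>x. b0 k m x * (m \<bullet> x) * (w \<bullet> x) \<partial>sphere_surface) + (\<integral>x. 0 \<partial>(sphere_surface::'a measure)))"
  proof (rule comb[where K="(k + 1) * 2 powr k * (norm w + 1)"])
    fix x :: 'a assume x: "norm x = 1"
    have "0 \<le> (k + 1) * 2 powr k * (norm w + 1)" using k by simp
    then show "\<bar>k * b0 k m x * (w \<bullet> x)\<bar> \<le> (k + 1) * 2 powr k * (norm w + 1) \<and> \<bar>b0 k m x * (m \<bullet> x) * (w \<bullet> x)\<bar> \<le> (k + 1) * 2 powr k * (norm w + 1) \<and>
         \<bar>b0 k m x * (m \<bullet> x) * (w \<bullet> x)\<bar> \<le> (k + 1) * 2 powr k * (norm w + 1) \<and> \<bar>0::real\<bar> \<le> (k + 1) * 2 powr k * (norm w + 1)"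
      using beta_bounds[OF m k x, of k w] k by simp
  qed (use k in auto)
  finally show ?thesis by simp
qed

lemma eqB:
  fixes m w :: "'a::euclidean_space"
  assumes m: "norm m = 1" and k: "0 \<le> k" and wm: "w \<bullet> m = 0" and w0: "w \<noteq> 0"
  shows "(1 / (k + real DIM('a)) - 1 / (k + 2 + real DIM('a))) * ((\<integral>x. (k + 1) * b0 k m x * (w \<bullet> x) \<partial>sphere_surface) + (\<integral>x. 0 \<partial>(sphere_surface::'a measure)))
         - (2 / (k + 2 + real DIM('a))) * ((\<integral>x. b0 k m x * (w \<bullet> x) \<partial>sphere_surface) + (\<integral>x. b0 k m x * (m \<bullet> x) * (w \<bullet> x) \<partial>sphere_surface)) = 0"
proof -
  have "(\<integral>z. gB k m w z \<partial>lborel) = 0" by (rule gB_int0[OF m wm k w0])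
  then have "0 = (\<integral>z. gB k m w z \<partial>lborel)" by simp
  also have "\<dots> = (\<integral>z. indicator DD z * gB k m w z \<partial>lborel)"
    by (rule int_restrict_DD) (auto simp: gB_def)
  also have "\<dots> = (\<integral>z. indicator DD z * (h1 k (norm z) * ((k + 1) * b0 k m (nrm z) * (w \<bullet> nrm z)) + h1 k (norm z) * 0
            - h2 k (norm z) * (b0 k m (nrm z) * (w \<bullet> nrm z)) - h2 k (norm z) * (b0 k m (nrm z) * (m \<bullet> nrm z) * (w \<bullet> nrm z))) \<partial>lborel)"
    by (intro Bochner_Integration.integral_cong refl) (auto simp: decB m k split: split_indicator)
  also have "\<dots> = (1 / (k + real DIM('a)) - 1 / (k + 2 + real DIM('a))) * ((\<integral>x. (k + 1) * b0 k m x * (w \<bullet> x) \<partial>sphere_surface) + (\<integral>x. 0 \<partial>(sphere_surface::'a measure)))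
         - (2 / (k + 2 + real DIM('a))) * ((\<integral>x. b0 k m x * (w \<bullet> x) \<partial>sphere_surface) + (\<integral>x. b0 k m x * (m \<bullet> x) * (w \<bullet> x) \<partial>sphere_surface))"
  proof (rule comb[where K="(k + 1) * 2 powr k * (norm w + 1)"])
    fix x :: 'a assume x: "norm x = 1"
    have "0 \<le> (k + 1) * 2 powr k * (norm w + 1)" using k by simp
    then show "\<bar>(k + 1) * b0 k m x * (w \<bullet> x)\<bar> \<le> (k + 1) * 2 powr k * (norm w + 1) \<and> \<bar>0::real\<bar> \<le> (k + 1) * 2 powr k * (norm w + 1) \<and>
         \<bar>b0 k m x * (w \<bullet> x)\<bar> \<le> (k + 1) * 2 powr k * (norm w + 1) \<and> \<bar>b0 k m x * (m \<bullet> x) * (w \<bullet> x)\<bar> \<le> (k + 1) * 2 powr k * (norm w + 1)"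
      using beta_bounds[OF m k x, of "k+1" w] k by simp
  qed (use k in auto)
  finally show ?thesis by simp
qed



lemma sph_pos:
  fixes f :: "'a::euclidean_space \<Rightarrow> real" and m :: 'a
  assumes m: "norm m = 1" and [measurable]: "f \<in> borel_measurable borel"
    and fb: "\<And>x. norm x = 1 \<Longrightarrow> 0 \<le> f x \<and> f x \<le> B"
    and fc: "\<And>x. norm x = 1 \<Longrightarrow> m \<bullet> x > 0 \<Longrightarrow> f x \<ge> cc" and cc: "cc > 0"
  shows "(\<integral>x. f x \<partial>sphere_surface) > 0"
proof -
  define Bl where "Bl = ball (m /\<^sub>R 2) (1/2)"
  have [measurable]: "Bl \<in> sets borel" by (simp add: Bl_def)
  have Bsub: "z \<in> DD \<and> m \<bullet> nrm z > 0" if z: "z \<in> Bl" for z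
  proof -
    have dz: "norm (z - m /\<^sub>R 2) < 1/2" using z by (simp add: Bl_def dist_norm norm_minus_commute)
    have "norm z \<le> norm (z - m /\<^sub>R 2) + norm (m /\<^sub>R 2)" using norm_triangle_ineq[of "z - m /\<^sub>R 2" "m /\<^sub>R 2"] by simp
    then have n1: "norm z \<le> 1" using dz m by simp
    have z0: "z \<noteq> 0" using dz m by auto
    have "m \<bullet> z = m \<bullet> (m /\<^sub>R 2) + m \<bullet> (z - m /\<^sub>R 2)" by (simp add: inner_diff_right)
    moreover have "m \<bullet> (m /\<^sub>R 2) = 1/2" using m by (simp add: inner_commute power2_norm_eq_inner[symmetric] norm_eq_1)
    moreover have "\<bar>m \<bullet> (z - m /\<^sub>R 2)\<bar> < 1/2" using Cauchy_Schwarz_ineq2[of m "z - m /\<^sub>R 2"] m dz by simp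
    ultimately have "m \<bullet> z > 0" by linarith
    then have "m \<bullet> nrm z > 0" using z0 by (simp add: nrm_eq)
    then show ?thesis using n1 z0 by (simp add: DD_def)
  qed
  have fB: "\<bar>f (nrm z)\<bar> \<le> B" for z :: 'a using fb[of "nrm z"] by simp
  have B0: "0 \<le> B" using fb[of "nrm 0"] by simp
  have i1: "integrable lborel (\<lambda>z::'a. indicator DD z * f (nrm z))"
    by (rule intDD[where K=B]) (use fB B0 in \<open>auto split: split_indicator simp: abs_mult\<close>)
  have fin: "emeasure lborel Bl < \<infinity>" using emeasure_bounded_finite[of Bl] by (simp add: Bl_def)
  have i2: "integrable lborel (\<lambda>z::'a. cc * indicator Bl z)"
    by (intro integrable_mult_right integrable_real_indicator) (use fin in auto)
  have "0 < cc * measure lborel Bl" using cc content_ball_pos[of "1/2" "m /\<^sub>R 2"] by (simp add: Bl_def)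
  also have "\<dots> = (\<integral>z. cc * indicator Bl z \<partial>lborel)" by simp
  also have "\<dots> \<le> (\<integral>z. indicator DD z * f (nrm z) \<partial>lborel)"
  proof (rule integral_mono[OF i2 i1])
    fix z :: 'a
    show "cc * indicator Bl z \<le> indicator DD z * f (nrm z)"
    proof (cases "z \<in> Bl")
      case True
      then show ?thesis using Bsub[OF True] fc[of "nrm z"] by simp
    next
      case False
      then show ?thesis using fb[of "nrm z"] by (simp split: split_indicator)
    qed
  qed
  finally have "0 < (\<integral>z. indicator DD z * f (nrm z) \<partial>lborel)" .
  then show ?thesis by (simp add: int_sph)
qed

lemma solveA:
  fixes p D a S1 :: real
  assumes k: "0 \<le> p" and D: "D \<ge> 2"
    and e: "(1 / (p + D) - 1 / (p + 2 + D)) * (a + S1) - (2 / (p + 2 + D)) * (S1 + 0) = 0"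
  shows "a = (p + D - 1) * S1"
proof -
  have p1: "p + D > 0" "p + 2 + D > 0" using k D by auto
  have "1 / (p + D) - 1 / (p + 2 + D) = 2 / (p + 2 + D) * (1 / (p + D))" using p1 by (simp add: field_simps)
  then have "2 / (p + 2 + D) * ((a + S1) / (p + D)) = 2 / (p + 2 + D) * S1" using e by simp
  moreover have cc: "2 / (p + 2 + D) \<noteq> 0" using p1 by simp
  ultimately have "(a + S1) / (p + D) = S1" by (simp only: mult_left_cancel[OF cc])
  then have "a + S1 = (p + D) * S1" using p1 by (simp add: divide_eq_eq mult.commute)
  then show ?thesis by (simp add: algebra_simps)
qed

lemma solveT:
  fixes k D T0 T1 :: real
  assumes k: "0 \<le> k" and D: "D \<ge> 2"
    and eC: "(1 / ((k+1) + D) - 1 / ((k+1) + 2 + D)) * (k * T0 + T1) - (2 / ((k+1) + 2 + D)) * (T1 + 0) = 0"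
    and eB: "(1 / (k + D) - 1 / (k + 2 + D)) * ((k + 1) * T0 + 0) - (2 / (k + 2 + D)) * (T0 + T1) = 0"
  shows "T0 = 0"
proof -
  have C: "k * T0 = ((k + 1) + D - 1) * T1" by (rule solveA[OF _ D eC]) (use k in simp)
  have p1: "k + D > 0" "k + 2 + D > 0" using k D by auto
  have "1 / (k + D) - 1 / (k + 2 + D) = 2 / (k + 2 + D) * (1 / (k + D))" using p1 by (simp add: field_simps)
  then have "2 / (k + 2 + D) * ((k + 1) * T0 / (k + D)) = 2 / (k + 2 + D) * (T0 + T1)" using eB by simp
  moreover have cc: "2 / (k + 2 + D) \<noteq> 0" using p1 by simp
  ultimately have "(k + 1) * T0 / (k + D) = T0 + T1" by (simp only: mult_left_cancel[OF cc])
  then have "(k + 1) * T0 = (k + D) * (T0 + T1)" using p1 by (simp add: divide_eq_eq mult.commute)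
  also have "\<dots> = (k + D) * T0 + k * T0" using C by (simp add: algebra_simps)
  finally have "(k + D - 1) * T0 = 0" by (simp add: algebra_simps)
  moreover have "k + D - 1 \<noteq> 0" using k D by simp
  ultimately show ?thesis by simp
qed



lemma b0_int:
  fixes m v :: "'a::euclidean_space"
  assumes m: "norm m = 1" and k: "0 \<le> k"
  shows "integrable sphere_surface (b0 k m)" "integrable sphere_surface (\<lambda>x. b0 k m x * (v \<bullet> x))"
proof -
  show "integrable sphere_surface (b0 k m)"
    by (rule sph_integrable[where B="2 powr k"]) (use b0_bounds[OF m k] in auto)
  show "integrable sphere_surface (\<lambda>x. b0 k m x * (v \<bullet> x))"
  proof (rule sph_integrable[where B="2 powr k * norm v"])
    fix x :: 'a assume x: "norm x = 1"
    show "\<bar>b0 k m x * (v \<bullet> x)\<bar> \<le> 2 powr k * norm v"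
      unfolding abs_mult using b0_bounds(1,2)[OF m k x] b0_bounds(4)[OF m k x, of v] by (intro mult_mono) auto
  qed measurable
qed

theorem theorem16:
  fixes \<mu>p \<mu>q :: "'a::euclidean_space" and \<kappa>p \<kappa>q :: real
  assumes "DIM('a) \<ge> 2"
    and "norm \<mu>p = 1" and "norm \<mu>q = 1"
    and "\<kappa>p \<ge> 0" and "\<kappa>q \<ge> 0"
  shows "let d = real DIM('a); \<alpha> = (d - 1) / 2 + \<kappa>p; \<beta> = (d - 1) / 2 in
    sph_KL (ps_density \<kappa>p \<mu>p) (vmf_density \<kappa>q \<mu>q)
      = - sph_entropy (ps_density \<kappa>p \<mu>p) + ln (vmf_norm \<kappa>q \<mu>q)
        - \<kappa>q * (\<mu>q \<bullet> \<mu>p) * ((\<alpha> - \<beta>) / (\<alpha> + \<beta>))"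
proof -
  note d2 = assms(1) and mp = assms(2) and mq = assms(3) and kp = assms(4) and kq = assms(5)
  define D where "D = real DIM('a)"
  have D2: "D \<ge> 2" using d2 by (simp add: D_def)
  define Z where "Z = (\<integral>x. b0 \<kappa>p \<mu>p x \<partial>(sphere_surface::'a measure))"
  have pu: "ps_unnorm \<kappa>p \<mu>p = b0 \<kappa>p \<mu>p" by (rule ext) (simp add: ps_unnorm_Pk b0_def)
  have Zpos: "Z > 0" unfolding Z_def
  proof (rule sph_pos[OF mp, where B="2 powr \<kappa>p" and cc=1])
    fix x :: 'a assume x: "norm x = 1"
    show "0 \<le> b0 \<kappa>p \<mu>p x \<and> b0 \<kappa>p \<mu>p x \<le> 2 powr \<kappa>p" using b0_bounds[OF mp kp x] by simp
    assume "\<mu>p \<bullet> x > 0"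
    then show "b0 \<kappa>p \<mu>p x \<ge> 1" using kp by (auto simp: b0_def Pk_def intro: ge_one_powr_ge_zero)
  qed auto
  define C where "C = vmf_norm \<kappa>q \<mu>q"
  have Cpos: "C > 0" unfolding C_def vmf_norm_def
  proof (rule sph_pos[OF mq, where B="exp \<kappa>q" and cc=1])
    fix x :: 'a assume x: "norm x = 1"
    have "\<mu>q \<bullet> x \<le> 1" using Cauchy_Schwarz_ineq2[of \<mu>q x] mq x by simp
    then have "\<kappa>q * (\<mu>q \<bullet> x) \<le> \<kappa>q" using kq by (simp add: mult_left_le)
    then show "0 \<le> exp (\<kappa>q * (\<mu>q \<bullet> x)) \<and> exp (\<kappa>q * (\<mu>q \<bullet> x)) \<le> exp \<kappa>q" by simp
    assume "\<mu>q \<bullet> x > 0"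
    then show "exp (\<kappa>q * (\<mu>q \<bullet> x)) \<ge> 1" using kq by simp
  qed auto
  define S1 where "S1 = (\<integral>x. b0 \<kappa>p \<mu>p x * (\<mu>p \<bullet> x) \<partial>(sphere_surface::'a measure))"
  have S1eq: "\<kappa>p * Z = (\<kappa>p + D - 1) * S1"
  proof (rule solveA[OF kp D2])
    have i0: "(\<integral>x. \<kappa>p * b0 \<kappa>p \<mu>p x \<partial>(sphere_surface::'a measure)) = \<kappa>p * Z" by (simp add: Z_def)
    have i00: "(\<integral>x. 0 \<partial>(sphere_surface::'a measure)) = (0::real)" by simp
    show "(1 / (\<kappa>p + D) - 1 / (\<kappa>p + 2 + D)) * (\<kappa>p * Z + S1) - 2 / (\<kappa>p + 2 + D) * (S1 + 0) = 0"
      by (rule eqA[OF d2 mp kp, unfolded i0 i00 D_def[symmetric] S1_def[symmetric]])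
  qed
  define c where "c = \<mu>q \<bullet> \<mu>p"
  define w where "w = \<mu>q - c *\<^sub>R \<mu>p"
  have wm: "w \<bullet> \<mu>p = 0" using mp by (simp add: w_def c_def inner_diff_left power2_norm_eq_inner[symmetric])
  define T0 where "T0 = (\<integral>x. b0 \<kappa>p \<mu>p x * (w \<bullet> x) \<partial>(sphere_surface::'a measure))"
  have T0: "T0 = 0"
  proof (cases "w = 0")
    case True then show ?thesis by (simp add: T0_def)
  next
    case False
    define T1 where "T1 = (\<integral>x. b0 \<kappa>p \<mu>p x * (\<mu>p \<bullet> x) * (w \<bullet> x) \<partial>(sphere_surface::'a measure))"
    have a1: "(\<integral>x. \<kappa>p * b0 \<kappa>p \<mu>p x * (w \<bullet> x) \<partial>(sphere_surface::'a measure)) = \<kappa>p * T0"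
      by (simp add: T0_def mult.assoc)
    have a2: "(\<integral>x. (\<kappa>p + 1) * b0 \<kappa>p \<mu>p x * (w \<bullet> x) \<partial>(sphere_surface::'a measure)) = (\<kappa>p + 1) * T0"
      by (simp add: T0_def mult.assoc)
    show ?thesis
    proof (rule solveT[OF kp D2])
      show "(1 / (\<kappa>p + 1 + D) - 1 / (\<kappa>p + 1 + 2 + D)) * (\<kappa>p * T0 + T1) - 2 / (\<kappa>p + 1 + 2 + D) * (T1 + 0) = 0"
        using eqC[OF d2 mp kp wm] a1 by (simp add: D_def T1_def)
      show "(1 / (\<kappa>p + D) - 1 / (\<kappa>p + 2 + D)) * ((\<kappa>p + 1) * T0 + 0) - 2 / (\<kappa>p + 2 + D) * (T0 + T1) = 0"
        using eqB[OF mp kp wm False] a2 by (simp add: D_def T1_def T0_def)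
    qed
  qed
  have Iq: "(\<integral>x. b0 \<kappa>p \<mu>p x * (\<mu>q \<bullet> x) \<partial>(sphere_surface::'a measure)) = c * S1"
  proof -
    have "(\<integral>x. b0 \<kappa>p \<mu>p x * (\<mu>q \<bullet> x) \<partial>(sphere_surface::'a measure))
        = (\<integral>x. c * (b0 \<kappa>p \<mu>p x * (\<mu>p \<bullet> x)) + b0 \<kappa>p \<mu>p x * (w \<bullet> x) \<partial>(sphere_surface::'a measure))"
      by (intro Bochner_Integration.integral_cong refl) (simp add: w_def inner_diff_left algebra_simps)
    also have "\<dots> = c * S1 + T0"
      using b0_int(2)[OF mp kp, where v=\<mu>p] b0_int(2)[OF mp kp, where v=w]
      by (simp add: S1_def T0_def)
    finally show ?thesis using T0 by simp
  qed
  have pd: "ps_density \<kappa>p \<mu>p x = b0 \<kappa>p \<mu>p x / Z" for x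
    by (simp add: ps_density_def pu Z_def)
  have lq: "ln (vmf_density \<kappa>q \<mu>q x) = \<kappa>q * (\<mu>q \<bullet> x) - ln C" for x
    using Cpos by (simp add: vmf_density_def C_def[symmetric] ln_div)
  have "(\<integral>x. ps_density \<kappa>p \<mu>p x * ln (vmf_density \<kappa>q \<mu>q x) \<partial>(sphere_surface::'a measure))
      = (\<integral>x. (\<kappa>q / Z) * (b0 \<kappa>p \<mu>p x * (\<mu>q \<bullet> x)) - (ln C / Z) * b0 \<kappa>p \<mu>p x \<partial>(sphere_surface::'a measure))"
    by (intro Bochner_Integration.integral_cong refl) (simp add: pd lq algebra_simps)
  also have "\<dots> = (\<kappa>q / Z) * (c * S1) - (ln C / Z) * Z"
    using b0_int(1)[OF mp kp] b0_int(2)[OF mp kp, where v=\<mu>q] Iq by (simp add: Z_def)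
  also have "\<dots> = \<kappa>q * c * (\<kappa>p / (\<kappa>p + D - 1)) - ln C"
  proof -
    have "S1 / Z = \<kappa>p / (\<kappa>p + D - 1)" using S1eq Zpos kp D2 by (simp add: field_simps)
    then show ?thesis using Zpos by (simp add: field_simps)
  qed
  finally have main: "(\<integral>x. ps_density \<kappa>p \<mu>p x * ln (vmf_density \<kappa>q \<mu>q x) \<partial>(sphere_surface::'a measure))
      = \<kappa>q * c * (\<kappa>p / (\<kappa>p + D - 1)) - ln C" .
  have ab1: "(D - 1) / 2 + \<kappa>p - (D - 1) / 2 = \<kappa>p" by simp
  have ab2: "(D - 1) / 2 + \<kappa>p + (D - 1) / 2 = \<kappa>p + D - 1" by (simp add: field_simps)
  have ab: "((D - 1) / 2 + \<kappa>p - (D - 1) / 2) / ((D - 1) / 2 + \<kappa>p + (D - 1) / 2) = \<kappa>p / (\<kappa>p + D - 1)"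
    unfolding ab1 ab2 ..
  show ?thesis
    unfolding Let_def sph_KL_def main D_def[symmetric] ab C_def[symmetric] c_def[symmetric]
    by (simp add: algebra_simps)
qed

end
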